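(* Let $(N_t)$ be a local martingale of class $(\mathcal C_0)$ with $N_0=1$, $S_t=\sup_{s\le t}N_s$, $S_\infty=\lim_t S_t$, and $\mu_t=\mathbf E[\log S_\infty\mid\mathcal F_t]$ (càdlàg version). Then for all $t\ge0$, $\log S_t=\sup_{s\le t}\mu_s-1$, equivalently $S_t=\exp(\overline\mu_t-1)$ with $\overline\mu_t=\sup_{s\le t}\mu_s$. Moreover $1-\frac{N_t}{S_t}=\overline\mu_t-\mu_t$.
   Context: Filtered probability space satisfying the usual hypotheses. Class $(\mathcal C_0)$: strictly positive $(\mathcal F_t)$ local martingales with no positive jumps tending to $0$ a.s. at infinity. *)

theory Defs
  imports "HOL-Probability.Probability"
begin

text \<open>Continuous-time stochastic processes indexed by time t \<ge> 0 (type real).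
  A process is a map X :: real \<Rightarrow> 'a \<Rightarrow> real; only times t \<ge> 0 matter.\<close>

definition usual_filtration :: "'a measure \<Rightarrow> (real \<Rightarrow> 'a measure) \<Rightarrow> bool" where
  "usual_filtration M F \<longleftrightarrow>
     prob_space M \<and>
     (\<forall>A\<in>null_sets M. \<forall>B. B \<subseteq> A \<longrightarrow> B \<in> sets M) \<and>
     (\<forall>t\<ge>0. subalgebra M (F t)) \<and>
     (\<forall>s t. 0 \<le> s \<longrightarrow> s \<le> t \<longrightarrow> sets (F s) \<subseteq> sets (F t)) \<and>
     null_sets M \<subseteq> sets (F 0) \<and>
     (\<forall>t\<ge>0. sets (F t) = (\<Inter>s\<in>{t<..}. sets (F s)))"

definition adapted :: "(real \<Rightarrow> 'a measure) \<Rightarrow> (real \<Rightarrow> 'a \<Rightarrow> real) \<Rightarrow> bool" where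
  "adapted F X \<longleftrightarrow> (\<forall>t\<ge>0. X t \<in> borel_measurable (F t))"

definition cadlag :: "(real \<Rightarrow> real) \<Rightarrow> bool" where
  "cadlag f \<longleftrightarrow> (\<forall>t\<ge>0. continuous (at_right t) f) \<and>
                 (\<forall>t>0. \<exists>l. (f \<longlongrightarrow> l) (at_left t))"

definition cadlag_process :: "'a measure \<Rightarrow> (real \<Rightarrow> 'a \<Rightarrow> real) \<Rightarrow> bool" where
  "cadlag_process M X \<longleftrightarrow> (AE \<omega> in M. cadlag (\<lambda>t. X t \<omega>))"

definition martingale :: "'a measure \<Rightarrow> (real \<Rightarrow> 'a measure) \<Rightarrow> (real \<Rightarrow> 'a \<Rightarrow> real) \<Rightarrow> bool" where
  "martingale M F X \<longleftrightarrow> adapted F X \<and> (\<forall>t\<ge>0. integrable M (X t)) \<and>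
     (\<forall>s t. 0 \<le> s \<longrightarrow> s \<le> t \<longrightarrow> (AE \<omega> in M. real_cond_exp M (F s) (X t) \<omega> = X s \<omega>))"

definition stopping_time_ext :: "(real \<Rightarrow> 'a measure) \<Rightarrow> ('a \<Rightarrow> ereal) \<Rightarrow> bool" where
  "stopping_time_ext F T \<longleftrightarrow> (\<forall>t\<ge>0. Measurable.pred (F t) (\<lambda>\<omega>. T \<omega> \<le> ereal t))"

definition stopped_process :: "('a \<Rightarrow> ereal) \<Rightarrow> (real \<Rightarrow> 'a \<Rightarrow> real) \<Rightarrow> real \<Rightarrow> 'a \<Rightarrow> real" where
  "stopped_process T X t \<omega> = (if T \<omega> \<le> ereal t then X (real_of_ereal (T \<omega>)) \<omega> else X t \<omega>)"

definition local_martingale :: "'a measure \<Rightarrow> (real \<Rightarrow> 'a measure) \<Rightarrow> (real \<Rightarrow> 'a \<Rightarrow> real) \<Rightarrow> bool" where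
  "local_martingale M F X \<longleftrightarrow> adapted F X \<and> cadlag_process M X \<and>
     (\<exists>T :: nat \<Rightarrow> 'a \<Rightarrow> ereal.
        (\<forall>n. stopping_time_ext F (T n)) \<and>
        (\<forall>n. \<forall>\<omega>\<in>space M. 0 \<le> T n \<omega>) \<and>
        (AE \<omega> in M. incseq (\<lambda>n. T n \<omega>) \<and> (\<lambda>n. T n \<omega>) \<longlonglongrightarrow> \<infinity>) \<and>
        (\<forall>n. martingale M F (stopped_process (T n) X)))"

definition class_C0 :: "'a measure \<Rightarrow> (real \<Rightarrow> 'a measure) \<Rightarrow> (real \<Rightarrow> 'a \<Rightarrow> real) \<Rightarrow> bool" where
  "class_C0 M F X \<longleftrightarrow> local_martingale M F X \<and>
     (\<forall>t\<ge>0. \<forall>\<omega>\<in>space M. 0 < X t \<omega>) \<and>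
     (AE \<omega> in M. \<forall>t>0. X t \<omega> \<le> Lim (at_left t) (\<lambda>s. X s \<omega>)) \<and>
     (AE \<omega> in M. ((\<lambda>t. X t \<omega>) \<longlongrightarrow> 0) at_top)"

definition running_sup :: "(real \<Rightarrow> 'a \<Rightarrow> real) \<Rightarrow> real \<Rightarrow> 'a \<Rightarrow> real" where
  "running_sup X t \<omega> = (SUP s\<in>{0..t}. X s \<omega>)"

definition terminal_sup :: "(real \<Rightarrow> 'a \<Rightarrow> real) \<Rightarrow> 'a \<Rightarrow> real" where
  "terminal_sup X \<omega> = Lim at_top (\<lambda>t. running_sup X t \<omega>)"

end

theory Submission
  imports Defs
begin

lemma cadlag_rc:
  assumes "cadlag f" "0 \<le> s"
  shows "(f \<longlongrightarrow> f s) (at_right s)"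
  using assms unfolding cadlag_def by (simp add: continuous_within)

lemma cadlag_locbdd:
  assumes "cadlag f" "0 \<le> s"
  shows "\<exists>d>0. \<exists>B. \<forall>x. 0 \<le> x \<and> \<bar>x - s\<bar> < d \<longrightarrow> f x \<le> B"
proof -
  have "eventually (\<lambda>x. f x < f s + 1) (at_right s)"
    using cadlag_rc[OF assms] by (rule order_tendstoD) simp
  then obtain b where b: "b > s" "\<And>x. x > s \<Longrightarrow> x < b \<Longrightarrow> f x < f s + 1"
    unfolding eventually_at_right_field by blast
  obtain c L where c: "c < s" "\<And>x. x < s \<Longrightarrow> x > c \<Longrightarrow> 0 \<le> x \<Longrightarrow> f x < L"
  proof (cases "s = 0")
    case True then show ?thesis using that[of "-1" 0] by auto
  next
    case False
    with assms have "s > 0" by simp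
    with assms obtain l where "(f \<longlongrightarrow> l) (at_left s)" unfolding cadlag_def by blast
    then have "eventually (\<lambda>x. f x < l + 1) (at_left s)"
      by (rule order_tendstoD) simp
    then obtain c where "c < s" "\<And>x. x > c \<Longrightarrow> x < s \<Longrightarrow> f x < l + 1"
      unfolding eventually_at_left_field by blast
    then show ?thesis using that[of c "l+1"] by auto
  qed
  define d where "d = min (b - s) (s - c)"
  have "d > 0" using b c by (simp add: d_def)
  moreover have "\<forall>x. 0 \<le> x \<and> \<bar>x - s\<bar> < d \<longrightarrow> f x \<le> max (f s) (max (f s + 1) L)"
  proof (intro allI impI)
    fix x assume x: "0 \<le> x \<and> \<bar>x - s\<bar> < d"
    consider "x = s" | "x > s" | "x < s" by linarith
    then show "f x \<le> max (f s) (max (f s + 1) L)"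
    proof cases
      case 2 then have "f x < f s + 1" using b(2)[of x] x by (auto simp: d_def)
      then show ?thesis by linarith
    next
      case 3 then have "f x < L" using c(2)[of x] x by (auto simp: d_def)
      then show ?thesis by linarith
    qed simp
  qed
  ultimately show ?thesis by blast
qed

lemma cadlag_bdd:
  assumes "cadlag f"
  shows "bdd_above (f ` {0..t})"
proof -
  have "\<forall>s\<in>{0..t}. \<exists>d>0. \<exists>B. \<forall>x. 0 \<le> x \<and> \<bar>x - s\<bar> < d \<longrightarrow> f x \<le> B"
    using cadlag_locbdd[OF assms] by auto
  then obtain d B where dB: "\<And>s. s \<in> {0..t} \<Longrightarrow> d s > 0"
     "\<And>s x. s \<in> {0..t} \<Longrightarrow> 0 \<le> x \<Longrightarrow> \<bar>x - s\<bar> < d s \<Longrightarrow> f x \<le> B s"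
    by metis
  have "compact {0..t}" by simp
  moreover have "\<And>s. s \<in> {0..t} \<Longrightarrow> open (ball s (d s))" by simp
  moreover have "{0..t} \<subseteq> (\<Union>s\<in>{0..t}. ball s (d s))"
    using dB(1) by force
  ultimately obtain D where D: "D \<subseteq> {0..t}" "finite D" "{0..t} \<subseteq> (\<Union>s\<in>D. ball s (d s))"
    by (rule compactE_image) blast
  show ?thesis
  proof (rule bdd_aboveI2)
    fix x assume x: "x \<in> {0..t}"
    then obtain s where s: "s \<in> D" "x \<in> ball s (d s)" using D by blast
    then have "f x \<le> B s" using dB(2)[of s x] D x by (auto simp: dist_real_def)
    also have "B s \<le> Max (B ` D)" using s D by simp
    finally show "f x \<le> Max (B ` D)" .
  qed
qed

definition rs :: "(real \<Rightarrow> real) \<Rightarrow> real \<Rightarrow> real" where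
  "rs f t = (SUP s\<in>{0..t}. f s)"

lemma cadlag_dense_gt:
  assumes "cadlag f" "0 \<le> s" "s < r" "f s > c"
  shows "\<exists>q\<in>\<rat>. s < q \<and> q < r \<and> f q > c"
proof -
  have "eventually (\<lambda>x. f x > c) (at_right s)"
    using cadlag_rc[OF assms(1,2)] assms(4) by (rule order_tendstoD)
  then obtain b where b: "b > s" "\<And>x. x > s \<Longrightarrow> x < b \<Longrightarrow> f x > c"
    unfolding eventually_at_right_field by blast
  obtain q where q: "q \<in> \<rat>" "s < q" "q < min b r"
    using Rats_dense_in_real[of s "min b r"] b assms by auto
  then show ?thesis using b by auto
qed

definition QI :: "real \<Rightarrow> real set" where
  "QI t = insert t {q. q \<in> \<rat> \<and> 0 \<le> q \<and> q \<le> t}"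

lemma countable_QI: "countable (QI t)"
proof -
  have "{q. q \<in> \<rat> \<and> 0 \<le> q \<and> q \<le> t} \<subseteq> \<rat>" by auto
  then show ?thesis unfolding QI_def using countable_rat countable_subset by blast
qed

lemma QI_sub: "0 \<le> t \<Longrightarrow> QI t \<subseteq> {0..t}"
  by (auto simp: QI_def)

lemma cadlag_le_QI:
  assumes "cadlag f" "0 \<le> t" "\<forall>s\<in>QI t. f s \<le> c"
  shows "\<forall>s\<in>{0..t}. f s \<le> c"
proof (intro ballI)
  fix s assume s: "s \<in> {0..t}"
  show "f s \<le> c"
  proof (cases "s = t")
    case True then show ?thesis using assms by (auto simp: QI_def)
  next
    case False
    show ?thesis
    proof (rule ccontr)
      assume "\<not> f s \<le> c"
      then obtain q where "q \<in> \<rat>" "s < q" "q < t" "f q > c"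
        using cadlag_dense_gt[OF assms(1), of s t c] s False by auto
      then show False using assms(3) s by (auto simp: QI_def)
    qed
  qed
qed

lemma rs_QI:
  assumes "cadlag f" "0 \<le> t"
  shows "rs f t = (SUP s\<in>QI t. f s)"
proof -
  have ne: "QI t \<noteq> {}" by (auto simp: QI_def)
  have bdd: "bdd_above (f ` {0..t})" by (rule cadlag_bdd[OF assms(1)])
  have bdd2: "bdd_above (f ` QI t)" using bdd QI_sub[OF assms(2)] by (meson bdd_above_mono image_mono)
  show ?thesis
  proof (rule antisym)
    show "rs f t \<le> (SUP s\<in>QI t. f s)"
      unfolding rs_def
      apply (rule cSUP_least) using assms(2) apply simp
      using cadlag_le_QI[OF assms, of "SUP s\<in>QI t. f s"] cSUP_upper[OF _ bdd2] by auto
    show "(SUP s\<in>QI t. f s) \<le> rs f t"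
      unfolding rs_def using QI_sub[OF assms(2)] ne bdd by (intro cSUP_subset_mono) auto
  qed
qed

lemma rs_ge: "cadlag f \<Longrightarrow> 0 \<le> s \<Longrightarrow> s \<le> t \<Longrightarrow> f s \<le> rs f t"
  unfolding rs_def by (rule cSUP_upper[OF _ cadlag_bdd]) auto

lemma rs_le: "0 \<le> t \<Longrightarrow> (\<And>s. 0 \<le> s \<Longrightarrow> s \<le> t \<Longrightarrow> f s \<le> c) \<Longrightarrow> rs f t \<le> c"
  unfolding rs_def by (rule cSUP_least) auto

lemma rs_mono: "cadlag f \<Longrightarrow> 0 \<le> s \<Longrightarrow> s \<le> t \<Longrightarrow> rs f s \<le> rs f t"
  by (rule rs_le) (auto intro: rs_ge)

lemma rs_rc:
  assumes "cadlag f" "0 \<le> t"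
  shows "((rs f) \<longlongrightarrow> rs f t) (at_right t)"
proof (rule order_tendstoI)
  fix a assume "a < rs f t"
  moreover have "eventually (\<lambda>x. rs f t \<le> rs f x) (at_right t)"
    using eventually_at_right_less[of t] by eventually_elim (use assms in \<open>auto intro: rs_mono\<close>)
  then show "eventually (\<lambda>x. a < rs f x) (at_right t)"
    by eventually_elim (use \<open>a < rs f t\<close> in simp)
next
  fix a assume a: "rs f t < a"
  have "eventually (\<lambda>x. f x < f t + (a - rs f t)/2) (at_right t)"
    using cadlag_rc[OF assms] by (rule order_tendstoD) (use a in simp)
  then obtain b where b: "b > t" "\<And>x. x > t \<Longrightarrow> x < b \<Longrightarrow> f x < f t + (a - rs f t)/2"
    unfolding eventually_at_right_field by blast
  have ft: "f t \<le> rs f t" using rs_ge[OF assms(1,2)] by simp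
  show "eventually (\<lambda>x. rs f x < a) (at_right t)"
    unfolding eventually_at_right_field
  proof (intro exI[of _ b] conjI allI impI)
    fix x assume x: "t < x" "x < b"
    have "rs f x \<le> rs f t + (a - rs f t)/2"
    proof (rule rs_le)
      fix s assume s: "0 \<le> s" "s \<le> x"
      show "f s \<le> rs f t + (a - rs f t)/2"
      proof (cases "s \<le> t")
        case True
        have "f s \<le> rs f t" using rs_ge[OF assms(1) s(1) True] .
        moreover have "(a - rs f t)/2 > 0" using a by simp
        ultimately show ?thesis by linarith
      next
        case False then show ?thesis using b(2)[of s] s x ft by simp
      qed
    qed (use x assms in simp)
    moreover have "rs f t + (a - rs f t)/2 < a" using a by (simp add: field_simps)
    ultimately show "rs f x < a" by (rule le_less_trans)
  qed (use b in simp)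
qed

lemma cadlag_bdd_all:
  assumes "cadlag f" "(f \<longlongrightarrow> 0) at_top"
  shows "bdd_above (f ` {0..})"
proof -
  have "eventually (\<lambda>x. f x < 1) at_top" using assms(2) by (rule order_tendstoD) simp
  then obtain R where R: "\<And>x. x \<ge> R \<Longrightarrow> f x < 1" unfolding eventually_at_top_linorder by blast
  obtain B where B: "\<And>x. x \<in> {0..max R 0} \<Longrightarrow> f x \<le> B"
    using cadlag_bdd[OF assms(1), of "max R 0"] unfolding bdd_above_def by fastforce
  show ?thesis
  proof (rule bdd_aboveI2)
    fix x :: real assume "x \<in> {0..}"
    then show "f x \<le> max B 1"
    proof (cases "x \<le> max R 0")
      case False then have "x \<ge> R" by simp
      then show ?thesis using R[of x] by simp
    qed (use B[of x] in auto)
  qed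
qed

lemma rs_lim:
  assumes "cadlag f" "(f \<longlongrightarrow> 0) at_top"
  shows "((rs f) \<longlongrightarrow> (SUP s\<in>{0..}. f s)) at_top"
proof (rule order_tendstoI)
  have bdd: "bdd_above (f ` {0..})" by (rule cadlag_bdd_all[OF assms])
  fix a assume "a < (SUP s\<in>{0..}. f s)"
  then obtain s where s: "s \<in> {0..}" "a < f s" using less_cSUP_iff[of "{0..}" f a] bdd by auto
  show "eventually (\<lambda>x. a < rs f x) at_top"
    unfolding eventually_at_top_linorder
    using s rs_ge[OF assms(1), of s] by (intro exI[of _ s]) (auto intro: less_le_trans)
next
  have bdd: "bdd_above (f ` {0..})" by (rule cadlag_bdd_all[OF assms])
  fix a assume a: "(SUP s\<in>{0..}. f s) < a"
  show "eventually (\<lambda>x. rs f x < a) at_top"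
    unfolding eventually_at_top_linorder
  proof (intro exI[of _ 0] allI impI)
    fix x :: real assume "x \<ge> 0"
    have "rs f x \<le> (SUP s\<in>{0..}. f s)"
      by (rule rs_le) (use \<open>x \<ge> 0\<close> bdd in \<open>auto intro: cSUP_upper\<close>)
    then show "rs f x < a" using a by simp
  qed
qed

lemma rs_Lim:
  assumes "cadlag f" "(f \<longlongrightarrow> 0) at_top"
  shows "Lim at_top (rs f) = (SUP s\<in>{0..}. f s)"
  using rs_lim[OF assms] by (intro tendsto_Lim) auto

lemma cadlag_hit_Q:
  assumes "cadlag f" "0 \<le> t"
  shows "(\<exists>s. t \<le> s \<and> s < r \<and> f s > y) \<longleftrightarrow> (\<exists>q\<in>\<rat>. t \<le> q \<and> q < r \<and> f q > y)"
proof
  assume "\<exists>s. t \<le> s \<and> s < r \<and> f s > y"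
  then obtain s where s: "t \<le> s" "s < r" "f s > y" by blast
  have "0 \<le> s" using s assms by simp
  from cadlag_dense_gt[OF assms(1) this s(2) s(3)] obtain q where "q\<in>\<rat>" "s < q" "q < r" "f q > y" by blast
  then show "\<exists>q\<in>\<rat>. t \<le> q \<and> q < r \<and> f q > y" using s by (intro bexI[of _ q]) auto
qed auto

lemma cadlag_hit_Q_all:
  assumes "cadlag f" "0 \<le> t"
  shows "(\<exists>s. t \<le> s \<and> f s > y) \<longleftrightarrow> (\<exists>q\<in>\<rat>. t \<le> q \<and> f q > y)"
proof
  assume "\<exists>s. t \<le> s \<and> f s > y"
  then obtain s where s: "t \<le> s" "f s > y" by blast
  have "0 \<le> s" using s assms by simp
  from cadlag_dense_gt[OF assms(1) this _ s(2), of "s+1"] obtain q where "q\<in>\<rat>" "s < q" "f q > y" by auto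
  then show "\<exists>q\<in>\<rat>. t \<le> q \<and> f q > y" using s by (intro bexI[of _ q]) auto
qed auto

lemma ae_meas:
  fixes f g :: "'a \<Rightarrow> real"
  assumes ae: "AE \<omega> in M. f \<omega> = g \<omega>" and g: "g \<in> borel_measurable G"
    and sp: "space G = space M"
    and cpl: "\<And>A B. A \<in> null_sets M \<Longrightarrow> B \<subseteq> A \<Longrightarrow> B \<in> sets G"
  shows "f \<in> borel_measurable G"
proof -
  from ae obtain A where A: "{\<omega>\<in>space M. \<not> f \<omega> = g \<omega>} \<subseteq> A" "emeasure M A = 0" "A \<in> sets M"
    by (rule AE_E)
  have An: "A \<in> null_sets M" using A by auto
  have AsM: "A \<subseteq> space M" using A(3) sets.sets_into_space by blast
  show ?thesis
  proof (rule measurableI)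
    fix x assume "x \<in> space G" then show "f x \<in> space borel" by simp
  next
    fix C :: "real set" assume C: "C \<in> sets borel"
    have "f -` C \<inter> space G = ((g -` C \<inter> space G) - A) \<union> ((f -` C \<inter> space G) \<inter> A)"
      using A(1) sp by auto
    moreover have "g -` C \<inter> space G \<in> sets G" using g C by (rule measurable_sets)
    moreover have "A \<in> sets G" using cpl[OF An] by simp
    moreover have "(f -` C \<inter> space G) \<inter> A \<in> sets G" using cpl[OF An] by simp
    ultimately show "f -` C \<inter> space G \<in> sets G" by (metis sets.Un sets.Diff)
  qed
qed

lemma (in prob_space) ui_limit:
  fixes X :: "nat \<Rightarrow> 'a \<Rightarrow> real"
  assumes Xm: "\<And>k. X k \<in> borel_measurable M" and Xn: "\<And>k \<omega>. \<omega> \<in> space M \<Longrightarrow> 0 \<le> X k \<omega>"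
    and Lm: "L \<in> borel_measurable M"
    and lim: "AE \<omega> in M. (\<lambda>k. X k \<omega>) \<longlonglongrightarrow> L \<omega>"
    and Yi: "integrable M Y" and Yn: "\<And>\<omega>. \<omega> \<in> space M \<Longrightarrow> 0 \<le> Y \<omega>"
    and Xi: "\<And>k. integrable M (X k)"
    and c: "\<And>k. integral\<^sup>L M (X k) = c"
    and tail: "\<And>k K. K > 0 \<Longrightarrow>
        (\<integral>\<omega>. X k \<omega> * indicator {\<omega>\<in>space M. X k \<omega> > K} \<omega> \<partial>M)
          \<le> (\<integral>\<omega>. Y \<omega> * indicator {\<omega>\<in>space M. X k \<omega> > K} \<omega> \<partial>M)"
  shows "integrable M L" "integral\<^sup>L M L = c"
proof -
  have Ln: "AE \<omega> in M. 0 \<le> L \<omega>"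
    using lim AE_space by eventually_elim (use Xn in \<open>auto intro!: LIMSEQ_le_const\<close>)
  have c0: "0 \<le> c" using c[of 0] Xn by (metis integral_nonneg_AE AE_I2)
  have "(\<integral>\<^sup>+\<omega>. ennreal (L \<omega>) \<partial>M) = (\<integral>\<^sup>+\<omega>. liminf (\<lambda>k. ennreal (X k \<omega>)) \<partial>M)"
  proof (rule nn_integral_cong_AE)
    show "AE \<omega> in M. ennreal (L \<omega>) = liminf (\<lambda>k. ennreal (X k \<omega>))"
      using lim by eventually_elim (rule lim_imp_Liminf[symmetric], simp, rule tendsto_ennrealI)
  qed
  also have "\<dots> \<le> liminf (\<lambda>k. \<integral>\<^sup>+\<omega>. ennreal (X k \<omega>) \<partial>M)"
    by (rule nn_integral_liminf) (use Xm in simp)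
  also have "(\<lambda>k. \<integral>\<^sup>+\<omega>. ennreal (X k \<omega>) \<partial>M) = (\<lambda>k. ennreal c)"
  proof
    fix k show "(\<integral>\<^sup>+\<omega>. ennreal (X k \<omega>) \<partial>M) = ennreal c"
      using nn_integral_eq_integral[OF Xi[of k]] Xn c[of k] by (simp add: AE_I2)
  qed
  also have "liminf (\<lambda>k. ennreal c) = ennreal c" by (simp add: Liminf_const)
  finally have fat: "(\<integral>\<^sup>+\<omega>. ennreal (L \<omega>) \<partial>M) \<le> ennreal c" .
  show Li: "integrable M L"
    by (rule integrableI_nonneg[OF Lm Ln]) (use fat in \<open>auto simp: top_unique intro: le_less_trans\<close>)
  have "integral\<^sup>L M L = enn2real (\<integral>\<^sup>+\<omega>. ennreal (L \<omega>) \<partial>M)"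
    by (rule integral_eq_nn_integral[OF Lm Ln])
  also have "\<dots> \<le> c" using fat c0 by (simp add: enn2real_leI)
  finally have up: "integral\<^sup>L M L \<le> c" .
  have low: "c \<le> integral\<^sup>L M L + e" if e: "e > 0" for e
  proof -
    define G where "G m = (\<lambda>\<omega>. Y \<omega> * indicator {\<omega>\<in>space M. Y \<omega> > real m} \<omega>)" for m :: nat
    have Gm: "G m \<in> borel_measurable M" for m
      unfolding G_def using Yi by measurable
    have "(\<lambda>m. integral\<^sup>L M (G m)) \<longlonglongrightarrow> integral\<^sup>L M (\<lambda>\<omega>. 0)"
    proof (rule integral_dominated_convergence[where w=Y])
      show "AE \<omega> in M. (\<lambda>m. G m \<omega>) \<longlonglongrightarrow> 0"
      proof (rule AE_I2)
        fix \<omega> assume "\<omega> \<in> space M"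
        obtain m0 :: nat where "Y \<omega> \<le> real m0" using real_arch_simple by blast
        then have "eventually (\<lambda>m. G m \<omega> = 0) sequentially"
          unfolding eventually_sequentially G_def by (intro exI[of _ m0]) auto
        then show "(\<lambda>m. G m \<omega>) \<longlonglongrightarrow> 0" by (rule tendsto_eventually)
      qed
      show "AE \<omega> in M. norm (G m \<omega>) \<le> Y \<omega>" for m
        using Yn by (auto simp: G_def indicator_def)
    qed (use Gm Yi in auto)
    then have "eventually (\<lambda>m. integral\<^sup>L M (G m) < e/3) sequentially"
      by (rule order_tendstoD) (use e in simp)
    then obtain m where m: "integral\<^sup>L M (G m) < e/3"
      by (auto simp: eventually_sequentially)
    define K where "K = 3 * real m * c / e + 1"
    have K0: "K > 0" unfolding K_def using c0 e by (simp add: field_simps add_pos_nonneg)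
    have mK: "real m * c / K < e/3"
    proof -
      have "real m * c * 3 < K * e" unfolding K_def using e by (simp add: field_simps)
      then show ?thesis using K0 e by (simp add: field_simps)
    qed
    define C where "C k = {\<omega>\<in>space M. X k \<omega> > K}" for k
    have Cs: "C k \<in> sets M" for k unfolding C_def using Xm[of k] by measurable
    have markov: "K * prob (C k) \<le> c" for k
    proof -
      have "K * prob (C k) = (\<integral>\<omega>. K * indicator (C k) \<omega> \<partial>M)"
        using Cs by simp
      also have "\<dots> \<le> integral\<^sup>L M (X k)"
      proof (rule integral_mono)
        show "integrable M (\<lambda>\<omega>. K * indicator (C k) \<omega>)"
          using Cs by (intro integrable_mult_right integrable_real_indicator) (auto simp: less_top[symmetric])
      qed (use Xi Cs Xn in \<open>auto simp: C_def indicator_def\<close>)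
      finally show ?thesis using c by simp
    qed
    have bnd: "c \<le> (\<integral>\<omega>. min (X k \<omega>) K \<partial>M) + 2*e/3" for k
    proof -
      have i1: "integrable M (\<lambda>\<omega>. min (X k \<omega>) K)"
        by (rule Bochner_Integration.integrable_bound[OF Xi[of k]]) (use Xm[of k] Xn K0 in auto)
      have i2: "integrable M (\<lambda>\<omega>. X k \<omega> * indicator (C k) \<omega>)"
        using integrable_mult_indicator[OF Cs Xi[of k]] by (simp add: mult.commute)
      have i3: "integrable M (\<lambda>\<omega>. Y \<omega> * indicator (C k) \<omega>)"
        using integrable_mult_indicator[OF Cs Yi] by (simp add: mult.commute)
      have i4: "integrable M (G m)"
        unfolding G_def using integrable_mult_indicator[OF _ Yi, of "{\<omega>\<in>space M. Y \<omega> > real m}"] Yi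
        by (simp add: mult.commute)
      have "c = integral\<^sup>L M (X k)" using c by simp
      also have "\<dots> \<le> (\<integral>\<omega>. min (X k \<omega>) K + X k \<omega> * indicator (C k) \<omega> \<partial>M)"
        by (rule integral_mono) (use Xi i1 i2 K0 in \<open>auto simp: C_def indicator_def\<close>)
      also have "\<dots> = (\<integral>\<omega>. min (X k \<omega>) K \<partial>M) + (\<integral>\<omega>. X k \<omega> * indicator (C k) \<omega> \<partial>M)"
        using i1 i2 by simp
      also have "(\<integral>\<omega>. X k \<omega> * indicator (C k) \<omega> \<partial>M) \<le> (\<integral>\<omega>. Y \<omega> * indicator (C k) \<omega> \<partial>M)"
        using tail[OF K0, of k] unfolding C_def .
      also have "(\<integral>\<omega>. Y \<omega> * indicator (C k) \<omega> \<partial>M) \<le> (\<integral>\<omega>. G m \<omega> + real m * indicator (C k) \<omega> \<partial>M)"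
      proof (rule integral_mono)
        show "integrable M (\<lambda>\<omega>. G m \<omega> + real m * indicator (C k) \<omega>)"
          using i4 Cs by (intro Bochner_Integration.integrable_add integrable_mult_right integrable_real_indicator) (auto simp: less_top[symmetric])
      qed (use i3 Cs Yn sets.sets_into_space in \<open>auto simp: G_def indicator_def\<close>)
      also have "\<dots> = integral\<^sup>L M (G m) + (\<integral>\<omega>. real m * indicator (C k) \<omega> \<partial>M)"
        using i4 Cs by (intro Bochner_Integration.integral_add integrable_mult_right integrable_real_indicator) (auto simp: less_top[symmetric])
      also have "(\<integral>\<omega>. real m * indicator (C k) \<omega> \<partial>M) = real m * prob (C k)"
        using Cs by simp
      also have "real m * prob (C k) \<le> real m * c / K"
      proof -
        have "real m * (K * prob (C k)) \<le> real m * c" using markov[of k] by (intro mult_left_mono) auto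
        then show ?thesis using K0 by (simp add: field_simps)
      qed
      finally show ?thesis using m mK by linarith
    qed
    have "(\<lambda>k. \<integral>\<omega>. min (X k \<omega>) K \<partial>M) \<longlonglongrightarrow> (\<integral>\<omega>. min (L \<omega>) K \<partial>M)"
    proof (rule integral_dominated_convergence[where w="\<lambda>_. K"])
      show "AE \<omega> in M. (\<lambda>k. min (X k \<omega>) K) \<longlonglongrightarrow> min (L \<omega>) K"
        using lim by eventually_elim (auto intro: tendsto_min)
      show "AE \<omega> in M. norm (min (X k \<omega>) K) \<le> K" for k
        using Xn K0 by (auto intro!: AE_I2)
    qed (use Xm Lm in auto)
    then have "eventually (\<lambda>k. (\<integral>\<omega>. min (X k \<omega>) K \<partial>M) < (\<integral>\<omega>. min (L \<omega>) K \<partial>M) + e/3) sequentially"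
      by (rule order_tendstoD) (use e in simp)
    then obtain k where k: "(\<integral>\<omega>. min (X k \<omega>) K \<partial>M) < (\<integral>\<omega>. min (L \<omega>) K \<partial>M) + e/3"
      by (auto simp: eventually_sequentially)
    have "(\<integral>\<omega>. min (L \<omega>) K \<partial>M) \<le> integral\<^sup>L M L"
      by (rule integral_mono_AE) (use Li Lm K0 in \<open>auto intro: Bochner_Integration.integrable_bound[OF Li] \<close>)
    then show ?thesis using bnd[of k] k by linarith
  qed
  show "integral\<^sup>L M L = c"
    using up low by (meson antisym field_le_epsilon)
qed

locale ctx =
  fixes M :: "'a measure" and F :: "real \<Rightarrow> 'a measure" and N :: "real \<Rightarrow> 'a \<Rightarrow> real"
  assumes usual: "usual_filtration M F" and C0: "class_C0 M F N"
    and N0: "\<forall>\<omega>\<in>space M. N 0 \<omega> = 1"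
begin

lemma usual_p1: "prob_space M"
  using usual unfolding usual_filtration_def by (elim conjE) assumption
lemma usual_p2: "(\<forall>A\<in>null_sets M. \<forall>B. B \<subseteq> A \<longrightarrow> B \<in> sets M)"
  using usual unfolding usual_filtration_def by (elim conjE) assumption
lemma usual_p3: "(\<forall>t\<ge>0. subalgebra M (F t))"
  using usual unfolding usual_filtration_def by (elim conjE) assumption
lemma usual_p4: "(\<forall>s t. 0 \<le> s \<longrightarrow> s \<le> t \<longrightarrow> sets (F s) \<subseteq> sets (F t))"
  using usual unfolding usual_filtration_def by (elim conjE) assumption
lemma usual_p5: "null_sets M \<subseteq> sets (F 0)"
  using usual unfolding usual_filtration_def by (elim conjE) assumption
lemmas usual_parts = usual_p1 usual_p2 usual_p3 usual_p4 usual_p5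

lemma prob: "prob_space M" by (rule usual_p1)

sublocale prob_space M by (rule prob)

lemma subalg: "0 \<le> t \<Longrightarrow> subalgebra M (F t)"
  using usual_p3 by simp

lemma F_space: "0 \<le> t \<Longrightarrow> space (F t) = space M"
  using subalg unfolding subalgebra_def by simp

lemma F_sets: "0 \<le> t \<Longrightarrow> A \<in> sets (F t) \<Longrightarrow> A \<in> sets M"
  using subalg unfolding subalgebra_def by auto

lemma F_mono: "0 \<le> s \<Longrightarrow> s \<le> t \<Longrightarrow> A \<in> sets (F s) \<Longrightarrow> A \<in> sets (F t)"
  using usual_p4 by blast

lemma M_cpl: "A \<in> null_sets M \<Longrightarrow> B \<subseteq> A \<Longrightarrow> B \<in> sets M"
  using usual_p2 by blast

lemma F_cpl: "0 \<le> t \<Longrightarrow> A \<in> null_sets M \<Longrightarrow> B \<subseteq> A \<Longrightarrow> B \<in> sets (F t)"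
proof -
  assume t: "0 \<le> t" and A: "A \<in> null_sets M" and B: "B \<subseteq> A"
  have "B \<in> sets M" by (rule M_cpl[OF A B])
  then have "B \<in> null_sets M" using A B null_sets_subset by blast
  then have "B \<in> sets (F 0)" using usual_p5 by blast
  then show "B \<in> sets (F t)" using F_mono[of 0 t] t by simp
qed

lemma F_meas_M: fixes f :: "'a \<Rightarrow> real" shows "0 \<le> t \<Longrightarrow> f \<in> borel_measurable (F t) \<Longrightarrow> f \<in> borel_measurable M"
  by (rule measurable_from_subalg[OF subalg])

lemma F_meas_mono: fixes f :: "'a \<Rightarrow> real" shows "0 \<le> s \<Longrightarrow> s \<le> t \<Longrightarrow> f \<in> borel_measurable (F s) \<Longrightarrow> f \<in> borel_measurable (F t)"
proof -
  assume st: "0 \<le> s" "s \<le> t" and f: "f \<in> borel_measurable (F s)"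
  have s1: "space (F s) = space M" using st(1) by (rule F_space)
  have "0 \<le> t" using st by linarith
  then have s2: "space (F t) = space M" by (rule F_space)
  have sp: "space (F s) = space (F t)" unfolding s1 s2 ..
  show ?thesis
  proof (rule measurableI)
    fix A :: "real set" assume A: "A \<in> sets borel"
    have "f -` A \<inter> space (F s) \<in> sets (F s)" by (rule measurable_sets[OF f A])
    then have "f -` A \<inter> space (F s) \<in> sets (F t)" by (rule F_mono[OF st])
    then show "f -` A \<inter> space (F t) \<in> sets (F t)" unfolding sp .
  qed simp
qed

lemma sfs: "0 \<le> t \<Longrightarrow> sigma_finite_subalgebra M (F t)"
  by (rule finite_measure_subalgebra_is_sigma_finite)
     (simp add: finite_measure_subalgebra_def finite_measure_subalgebra_axioms_def subalg finite_measure_axioms)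

lemma mart_int:
  assumes "martingale M F X" "0 \<le> s" "s \<le> t" "A \<in> sets (F s)"
  shows "(\<integral>\<omega>. indicator A \<omega> * X t \<omega> \<partial>M) = (\<integral>\<omega>. indicator A \<omega> * X s \<omega> \<partial>M)"
proof -
  interpret S: sigma_finite_subalgebra M "F s" by (rule sfs[OF assms(2)])
  have it: "integrable M (X t)" using assms unfolding martingale_def by auto
  have ae: "AE \<omega> in M. real_cond_exp M (F s) (X t) \<omega> = X s \<omega>" using assms unfolding martingale_def by auto
  have "(\<integral>\<omega>. indicator A \<omega> * X t \<omega> \<partial>M) = (\<integral>\<omega>\<in>A. X t \<omega> \<partial>M)"
    by (simp add: set_lebesgue_integral_def)
  also have "\<dots> = (\<integral>\<omega>\<in>A. real_cond_exp M (F s) (X t) \<omega> \<partial>M)"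
    by (rule S.real_cond_exp_intA[OF it assms(4)])
  also have "\<dots> = (\<integral>\<omega>\<in>A. X s \<omega> \<partial>M)"
  proof -
    have AM: "A \<in> sets M" using F_sets[OF assms(2,4)] .
    have m1: "real_cond_exp M (F s) (X t) \<in> borel_measurable M" by (rule borel_measurable_cond_exp2)
    have "X s \<in> borel_measurable (F s)" using assms(1,2) unfolding martingale_def adapted_def by blast
    then have m2: "X s \<in> borel_measurable M" by (rule F_meas_M[OF assms(2)])
    show ?thesis
    unfolding set_lebesgue_integral_def
    by (rule integral_cong_AE) (use ae m1 m2 AM in auto)
  qed
  finally show ?thesis by (simp add: set_lebesgue_integral_def)
qed

lemma N_meas: "0 \<le> t \<Longrightarrow> N t \<in> borel_measurable (F t)"
  using C0 unfolding class_C0_def local_martingale_def adapted_def by auto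

lemma N_measM: "0 \<le> t \<Longrightarrow> N t \<in> borel_measurable M"
  using N_meas F_meas_M by blast

lemma N_pos: "0 \<le> t \<Longrightarrow> \<omega> \<in> space M \<Longrightarrow> 0 < N t \<omega>"
  using C0 unfolding class_C0_def by auto

definition TT where
  "TT = (SOME T :: nat \<Rightarrow> 'a \<Rightarrow> ereal.
        (\<forall>n. stopping_time_ext F (T n)) \<and>
        (\<forall>n. \<forall>\<omega>\<in>space M. 0 \<le> T n \<omega>) \<and>
        (AE \<omega> in M. incseq (\<lambda>n. T n \<omega>) \<and> (\<lambda>n. T n \<omega>) \<longlonglongrightarrow> \<infinity>) \<and>
        (\<forall>n. martingale M F (stopped_process (T n) N)))"

lemma TT: "(\<forall>n. stopping_time_ext F (TT n)) \<and>
        (\<forall>n. \<forall>\<omega>\<in>space M. 0 \<le> TT n \<omega>) \<and>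
        (AE \<omega> in M. incseq (\<lambda>n. TT n \<omega>) \<and> (\<lambda>n. TT n \<omega>) \<longlonglongrightarrow> \<infinity>) \<and>
        (\<forall>n. martingale M F (stopped_process (TT n) N))"
proof -
  have "\<exists>T :: nat \<Rightarrow> 'a \<Rightarrow> ereal.
        (\<forall>n. stopping_time_ext F (T n)) \<and>
        (\<forall>n. \<forall>\<omega>\<in>space M. 0 \<le> T n \<omega>) \<and>
        (AE \<omega> in M. incseq (\<lambda>n. T n \<omega>) \<and> (\<lambda>n. T n \<omega>) \<longlonglongrightarrow> \<infinity>) \<and>
        (\<forall>n. martingale M F (stopped_process (T n) N))"
    using C0 unfolding class_C0_def local_martingale_def by (elim conjE) assumption
  then show ?thesis unfolding TT_def by (rule someI_ex)
qed

lemma TT_nonneg: "\<omega> \<in> space M \<Longrightarrow> 0 \<le> TT n \<omega>" using TT by auto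
lemma TT_mart: "martingale M F (stopped_process (TT n) N)" using TT by auto

definition good :: "'a \<Rightarrow> bool" where
  "good \<omega> \<longleftrightarrow> cadlag (\<lambda>t. N t \<omega>) \<and> (\<forall>t>0. N t \<omega> \<le> Lim (at_left t) (\<lambda>s. N s \<omega>)) \<and>
     ((\<lambda>t. N t \<omega>) \<longlongrightarrow> 0) at_top \<and> (\<lambda>n. TT n \<omega>) \<longlonglongrightarrow> \<infinity>"

lemma AE_good: "AE \<omega> in M. good \<omega>"
proof -
  have "AE \<omega> in M. cadlag (\<lambda>t. N t \<omega>)"
    using C0 unfolding class_C0_def local_martingale_def cadlag_process_def by auto
  moreover have "AE \<omega> in M. \<forall>t>0. N t \<omega> \<le> Lim (at_left t) (\<lambda>s. N s \<omega>)"
    using C0 unfolding class_C0_def by auto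
  moreover have "AE \<omega> in M. ((\<lambda>t. N t \<omega>) \<longlongrightarrow> 0) at_top"
    using C0 unfolding class_C0_def by auto
  moreover have "AE \<omega> in M. (\<lambda>n. TT n \<omega>) \<longlonglongrightarrow> \<infinity>"
    using TT by auto
  ultimately show ?thesis unfolding good_def by eventually_elim auto
qed

lemma ae_lim_meas:
  fixes X :: "nat \<Rightarrow> 'a \<Rightarrow> real"
  assumes "\<And>k. X k \<in> borel_measurable M" "AE \<omega> in M. (\<lambda>k. X k \<omega>) \<longlonglongrightarrow> L \<omega>"
  shows "L \<in> borel_measurable M"
proof (rule ae_meas)
  show "(\<lambda>\<omega>. lim (\<lambda>k. X k \<omega>)) \<in> borel_measurable M" using assms(1) by measurable
  show "AE \<omega> in M. L \<omega> = lim (\<lambda>k. X k \<omega>)"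
    using assms(2) by eventually_elim (simp add: limI)
qed (auto intro: M_cpl)

end

lemma stopped_rc:
  fixes f :: "real \<Rightarrow> real" and T :: ereal
  assumes "cadlag f" "0 \<le> a" "0 \<le> T"
  defines "g \<equiv> (\<lambda>s. if T \<le> ereal s then f (real_of_ereal T) else f s)"
  shows "(g \<longlongrightarrow> g a) (at_right a)"
proof (cases "T \<le> ereal a")
  case True
  have "eventually (\<lambda>s. g s = g a) (at_right a)"
    using eventually_at_right_less[of a]
    by eventually_elim (use True in \<open>auto simp: g_def intro: order_trans\<close>)
  then show ?thesis by (rule tendsto_eventually)
next
  case False
  then have gaf: "g a = f a" by (simp add: g_def)
  have ev: "eventually (\<lambda>s. \<not> T \<le> ereal s) (at_right a)"
  proof (cases T)
    case (real r)
    with False have "a < r" by simp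
    then have "eventually (\<lambda>s. s < r) (at_right a)"
      unfolding eventually_at_right_field by (intro exI[of _ r]) auto
    then show ?thesis by eventually_elim (use real in auto)
  qed (use False in auto)
  have "eventually (\<lambda>s. f s = g s) (at_right a)" using ev by eventually_elim (simp add: g_def)
  from tendsto_cong[OF this] cadlag_rc[OF assms(1,2)] show ?thesis
    unfolding gaf by simp
qed

lemma rc_seq:
  fixes g :: "real \<Rightarrow> real"
  assumes "(g \<longlongrightarrow> g a) (at_right a)" "x \<longlonglongrightarrow> a" "\<And>k. x k \<ge> a"
  shows "(\<lambda>k. g (x k)) \<longlonglongrightarrow> g a"
proof (rule tendstoI)
  fix e :: real assume e: "e > 0"
  have "eventually (\<lambda>s. dist (g s) (g a) < e) (at_right a)"
    using assms(1) e by (rule tendstoD)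
  then obtain b where b: "b > a" "\<And>s. s > a \<Longrightarrow> s < b \<Longrightarrow> dist (g s) (g a) < e"
    unfolding eventually_at_right_field by blast
  have "eventually (\<lambda>k. x k < b) sequentially"
    using assms(2) b(1) by (rule order_tendstoD)
  then show "eventually (\<lambda>k. dist (g (x k)) (g a) < e) sequentially"
  proof eventually_elim
    case (elim k)
    show ?case
    proof (cases "x k = a")
      case True then show ?thesis using e by simp
    next
      case False then show ?thesis using b(2)[of "x k"] assms(3)[of k] elim by simp
    qed
  qed
qed

definition nojump :: "(real \<Rightarrow> real) \<Rightarrow> bool" where
  "nojump f \<longleftrightarrow> (\<forall>t>0. f t \<le> Lim (at_left t) f)"

lemma hs_ge:
  fixes f :: "real \<Rightarrow> real"
  assumes "{s. t \<le> s \<and> y < f s} \<noteq> {}"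
  shows "t \<le> Inf {s. t \<le> s \<and> y < f s}"
  using assms by (intro cInf_greatest) auto

lemma hs_lower:
  fixes f :: "real \<Rightarrow> real"
  assumes "t \<le> s" "y < f s"
  shows "Inf {s. t \<le> s \<and> y < f s} \<le> s"
  using assms by (intro cInf_lower) (auto intro: bdd_belowI[of _ t])

lemma hs_less_iff:
  assumes "{s. t \<le> s \<and> y < (f::real\<Rightarrow>real) s} \<noteq> {}"
  shows "Inf {s. t \<le> s \<and> y < f s} < r \<longleftrightarrow> (\<exists>s. t \<le> s \<and> s < r \<and> y < f s)"
proof -
  have bdd: "bdd_below {s. t \<le> s \<and> y < f s}" by (rule bdd_belowI[of _ t]) auto
  show ?thesis using cInf_less_iff[OF assms bdd, of r] by auto
qed

lemma hs_before:
  assumes "cadlag f" "0 \<le> t" "rs f t \<le> y" "0 \<le> s" "s < Inf {s. t \<le> s \<and> y < f s}"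
  shows "f s \<le> y"
proof (cases "s \<le> t")
  case True then show ?thesis using rs_ge[OF assms(1,4) True] assms(3) by linarith
next
  case False
  show ?thesis
  proof (rule ccontr)
    assume "\<not> f s \<le> y"
    then have "Inf {s. t \<le> s \<and> y < f s} \<le> s" using False by (intro hs_lower) auto
    then show False using assms(5) by linarith
  qed
qed

lemma hs_at:
  assumes "cadlag f" "nojump f" "0 \<le> t" "rs f t \<le> y" "{s. t \<le> s \<and> y < f s} \<noteq> {}"
  shows "f (Inf {s. t \<le> s \<and> y < f s}) = y"
proof -
  define \<tau> where "\<tau> = Inf {s. t \<le> s \<and> y < f s}"
  have t\<tau>: "t \<le> \<tau>" unfolding \<tau>_def by (rule hs_ge[OF assms(5)])
  have le: "f \<tau> \<le> y"
  proof (cases "\<tau> = t")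
    case True then show ?thesis using rs_ge[OF assms(1,3), of t] assms(4) by simp
  next
    case False
    then have "\<tau> > t" using t\<tau> by simp
    then have "\<tau> > 0" using assms(3) by simp
    then obtain l where l: "(f \<longlongrightarrow> l) (at_left \<tau>)" using assms(1) unfolding cadlag_def by blast
    have "eventually (\<lambda>s. f s \<le> y) (at_left \<tau>)"
    proof -
      have "eventually (\<lambda>s. s \<in> {t<..<\<tau>}) (at_left \<tau>)" using \<open>\<tau> > t\<close> by (rule eventually_at_left_real)
      then show ?thesis
        by eventually_elim (use hs_before[OF assms(1,3,4)] assms(3) in \<open>auto simp: \<tau>_def\<close>)
    qed
    then have "l \<le> y" using l by (intro tendsto_upperbound[of f l "at_left \<tau>"]) auto
    moreover have "Lim (at_left \<tau>) f = l" using l by (intro tendsto_Lim) auto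
    moreover have "f \<tau> \<le> Lim (at_left \<tau>) f" using assms(2) \<open>\<tau> > 0\<close> unfolding nojump_def by blast
    ultimately show ?thesis by linarith
  qed
  have ge: "y \<le> f \<tau>"
  proof (rule ccontr)
    assume "\<not> y \<le> f \<tau>"
    then have "f \<tau> < y" by simp
    have "eventually (\<lambda>s. f s < y) (at_right \<tau>)"
      using cadlag_rc[OF assms(1)] t\<tau> assms(3) \<open>f \<tau> < y\<close> by (intro order_tendstoD) auto
    then obtain b where b: "b > \<tau>" "\<And>s. s > \<tau> \<Longrightarrow> s < b \<Longrightarrow> f s < y"
      unfolding eventually_at_right_field by blast
    have "\<tau> < b" by fact
    then obtain s where s: "t \<le> s" "s < b" "y < f s"
      using hs_less_iff[OF assms(5), of b] unfolding \<tau>_def by blast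
    have "\<tau> \<le> s" unfolding \<tau>_def using s by (intro hs_lower) auto
    moreover have "s \<noteq> \<tau>" using s \<open>f \<tau> < y\<close> by auto
    ultimately show False using b(2)[of s] s by simp
  qed
  show ?thesis using le ge unfolding \<tau>_def by simp
qed

definition rhop :: "(real \<Rightarrow> real) \<Rightarrow> real \<Rightarrow> real \<Rightarrow> real \<Rightarrow> real" where
  "rhop f t y u = (if \<exists>s. t \<le> s \<and> s \<le> u \<and> y < f s then Inf {s. t \<le> s \<and> y < f s} else u)"

lemma rhop_ge: "t \<le> u \<Longrightarrow> t \<le> rhop f t y u"
  unfolding rhop_def by (auto intro: hs_ge)

lemma rhop_le: "t \<le> u \<Longrightarrow> rhop f t y u \<le> u"
  unfolding rhop_def by (auto intro: hs_lower order_trans)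

lemma rhop_bound:
  assumes "cadlag f" "nojump f" "0 \<le> t" "t \<le> u" "rs f t \<le> y" "0 \<le> s" "s \<le> rhop f t y u"
  shows "f s \<le> y"
proof (cases "\<exists>s. t \<le> s \<and> s \<le> u \<and> y < f s")
  case True
  then have ne: "{s. t \<le> s \<and> y < f s} \<noteq> {}" by auto
  have "s < Inf {s. t \<le> s \<and> y < f s} \<or> s = Inf {s. t \<le> s \<and> y < f s}"
    using assms(7) True unfolding rhop_def by auto
  then show ?thesis
    using hs_before[OF assms(1,3,5,6)] hs_at[OF assms(1,2,3,5) ne] by auto
next
  case False
  have "rhop f t y u = u" using False unfolding rhop_def by (rule if_not_P)
  then have "s \<le> u" using assms(7) by simp
  show ?thesis
  proof (cases "s \<le> t")
    case True then show ?thesis using rs_ge[OF assms(1,6) True] assms(5) by linarith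
  next
    case f2: False then show ?thesis using False \<open>s \<le> u\<close> by auto
  qed
qed

context ctx begin

lemma mart_integrable: "martingale M F X \<Longrightarrow> 0 \<le> t \<Longrightarrow> integrable M (X t)"
  unfolding martingale_def by blast

lemma mart_meas: "martingale M F X \<Longrightarrow> 0 \<le> t \<Longrightarrow> X t \<in> borel_measurable (F t)"
  unfolding martingale_def adapted_def by blast

lemma dos:
  assumes mart: "martingale M F X" and fin: "finite J"
    and r: "\<And>j. j \<in> J \<Longrightarrow> 0 \<le> r j \<and> r j \<le> u"
    and Es: "\<And>j. j \<in> J \<Longrightarrow> E j \<subseteq> space M"
    and part: "\<And>\<omega>. \<omega> \<in> space M \<Longrightarrow> \<exists>!j. j \<in> J \<and> \<omega> \<in> E j"
    and Cs: "C \<subseteq> space M" and CE: "\<And>j. j \<in> J \<Longrightarrow> C \<inter> E j \<in> sets (F (r j))"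
  shows "(\<integral>\<omega>. indicator C \<omega> * (\<Sum>j\<in>J. indicator (E j) \<omega> * X (r j) \<omega>) \<partial>M)
       = (\<integral>\<omega>. indicator C \<omega> * X u \<omega> \<partial>M)"
proof -
  have u0: "0 \<le> u" if "J \<noteq> {}" using r that by (meson all_not_in_conv order_trans)
  have CEM: "C \<inter> E j \<in> sets M" if "j \<in> J" for j using F_sets[OF _ CE[OF that]] r[OF that] by blast
  have intj: "integrable M (\<lambda>\<omega>. indicator (C \<inter> E j) \<omega> * X (r j) \<omega>)" if "j \<in> J" for j
    using integrable_mult_indicator[OF CEM[OF that] mart_integrable[OF mart, of "r j"]] r[OF that] by simp
  have intu: "integrable M (\<lambda>\<omega>. indicator (C \<inter> E j) \<omega> * X u \<omega>)" if "j \<in> J" for j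
    using integrable_mult_indicator[OF CEM[OF that] mart_integrable[OF mart, of u]] u0 that by auto
  have "(\<integral>\<omega>. indicator C \<omega> * (\<Sum>j\<in>J. indicator (E j) \<omega> * X (r j) \<omega>) \<partial>M)
      = (\<integral>\<omega>. (\<Sum>j\<in>J. indicator (C \<inter> E j) \<omega> * X (r j) \<omega>) \<partial>M)"
    by (rule Bochner_Integration.integral_cong) (simp_all only: sum_distrib_left indicator_inter_arith mult.assoc)
  also have "\<dots> = (\<Sum>j\<in>J. (\<integral>\<omega>. indicator (C \<inter> E j) \<omega> * X (r j) \<omega> \<partial>M))"
    by (rule Bochner_Integration.integral_sum) (rule intj)
  also have "\<dots> = (\<Sum>j\<in>J. (\<integral>\<omega>. indicator (C \<inter> E j) \<omega> * X u \<omega> \<partial>M))"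
  proof (rule sum.cong)
    fix j assume j: "j \<in> J"
    show "(\<integral>\<omega>. indicator (C \<inter> E j) \<omega> * X (r j) \<omega> \<partial>M) = (\<integral>\<omega>. indicator (C \<inter> E j) \<omega> * X u \<omega> \<partial>M)"
      using r[OF j] by (intro mart_int[OF mart _ _ CE[OF j], symmetric]) auto
  qed simp
  also have "\<dots> = (\<integral>\<omega>. (\<Sum>j\<in>J. indicator (C \<inter> E j) \<omega> * X u \<omega>) \<partial>M)"
    by (rule Bochner_Integration.integral_sum[symmetric]) (rule intu)
  also have "\<dots> = (\<integral>\<omega>. indicator C \<omega> * X u \<omega> \<partial>M)"
  proof (rule Bochner_Integration.integral_cong)
    fix \<omega> assume \<omega>: "\<omega> \<in> space M"
    then obtain j where j: "j \<in> J" "\<omega> \<in> E j" and uq: "\<And>i. i \<in> J \<Longrightarrow> \<omega> \<in> E i \<Longrightarrow> i = j"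
      using part by metis
    have "(\<Sum>i\<in>J. indicator (C \<inter> E i) \<omega> * X u \<omega>) = (\<Sum>i\<in>J. (if i = j then indicator C \<omega> * X u \<omega> else 0))"
    proof (rule sum.cong)
      fix i assume i: "i \<in> J"
      show "indicator (C \<inter> E i) \<omega> * X u \<omega> = (if i = j then indicator C \<omega> * X u \<omega> else 0)"
      proof (cases "i = j")
        case True then show ?thesis using j(2) by (simp add: indicator_inter_arith)
      next
        case False
        then have "\<omega> \<notin> E i" using uq[OF i] by blast
        then show ?thesis using False by (simp add: indicator_inter_arith)
      qed
    qed simp
    also have "\<dots> = indicator C \<omega> * X u \<omega>" using j fin by simp
    finally show "(\<Sum>i\<in>J. indicator (C \<inter> E i) \<omega> * X u \<omega>) = indicator C \<omega> * X u \<omega>" .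
  qed simp
  finally show ?thesis .
qed

end

locale kl = ctx +
  fixes t y :: real and B :: "'a set"
  assumes t0: "0 \<le> t" and y0: "0 < y" and BF: "B \<in> sets (F t)"
    and Bs: "\<And>\<omega>. \<omega> \<in> B \<Longrightarrow> running_sup N t \<omega> \<le> y"
begin

lemma BM: "B \<in> sets M" using F_sets[OF t0 BF] .
lemma Bsp: "B \<subseteq> space M" using BM sets.sets_into_space by blast

definition Mn :: "nat \<Rightarrow> real \<Rightarrow> 'a \<Rightarrow> real" where
  "Mn n = stopped_process (TT n) N"

definition Hq :: "real \<Rightarrow> 'a set" where
  "Hq r = {\<omega>\<in>space M. \<exists>q\<in>\<rat>. t \<le> q \<and> q < r \<and> y < N q \<omega>}"

definition gr :: "real \<Rightarrow> nat \<Rightarrow> nat \<Rightarrow> real" where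
  "gr u k j = t + real j * (u - t) / 2^k"

definition PP :: "real \<Rightarrow> nat \<Rightarrow> 'a \<Rightarrow> nat \<Rightarrow> bool" where
  "PP u k \<omega> j \<longleftrightarrow> (j = 2^k \<or> \<omega> \<in> Hq (gr u k j))"

definition jk :: "real \<Rightarrow> nat \<Rightarrow> 'a \<Rightarrow> nat" where
  "jk u k \<omega> = (LEAST j. PP u k \<omega> j)"

definition E :: "real \<Rightarrow> nat \<Rightarrow> nat \<Rightarrow> 'a set" where
  "E u k j = {\<omega>\<in>space M. jk u k \<omega> = j}"

definition rho :: "real \<Rightarrow> 'a \<Rightarrow> real" where
  "rho u \<omega> = rhop (\<lambda>s. N s \<omega>) t y u"

lemma Mn_mart: "martingale M F (Mn n)" unfolding Mn_def by (rule TT_mart)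

lemma Mn_measF: "0 \<le> s \<Longrightarrow> Mn n s \<in> borel_measurable (F s)"
  by (rule mart_meas[OF Mn_mart])

lemma Mn_meas: "0 \<le> s \<Longrightarrow> Mn n s \<in> borel_measurable M"
  by (rule F_meas_M[OF _ Mn_measF])

lemma Mn_int: "0 \<le> s \<Longrightarrow> integrable M (Mn n s)"
  by (rule mart_integrable[OF Mn_mart])

lemma Mn_val:
  assumes "\<omega> \<in> space M" "0 \<le> s"
  shows "\<exists>s'. 0 \<le> s' \<and> s' \<le> s \<and> Mn n s \<omega> = N s' \<omega>"
proof (cases "TT n \<omega> \<le> ereal s")
  case True
  have T0: "0 \<le> TT n \<omega>" by (rule TT_nonneg[OF assms(1)])
  then have "TT n \<omega> \<noteq> \<infinity>" "TT n \<omega> \<noteq> -\<infinity>" using True by auto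
  then obtain r where r: "TT n \<omega> = ereal r" by (cases "TT n \<omega>") auto
  show ?thesis using True T0 unfolding Mn_def stopped_process_def r
    by (intro exI[of _ r]) auto
next
  case False then show ?thesis unfolding Mn_def stopped_process_def using assms
    by (intro exI[of _ s]) auto
qed

lemma Mn_pos: "\<omega> \<in> space M \<Longrightarrow> 0 \<le> s \<Longrightarrow> 0 < Mn n s \<omega>"
  using Mn_val[of \<omega> s n] N_pos by auto

lemma Hq_F:
  assumes "t \<le> r"
  shows "Hq r \<in> sets (F r)"
proof -
  have r0: "0 \<le> r" using t0 assms by linarith
  have "Hq r = (\<Union>q\<in>{q. q \<in> \<rat> \<and> t \<le> q \<and> q < r}. {\<omega>\<in>space (F r). y < N q \<omega>})"
    unfolding Hq_def F_space[OF r0] by auto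
  also have "\<dots> \<in> sets (F r)"
  proof (rule sets.countable_UN'')
    show "countable {q. q \<in> \<rat> \<and> t \<le> q \<and> q < r}"
      by (rule countable_subset[OF _ countable_rat]) auto
    fix q assume q: "q \<in> {q. q \<in> \<rat> \<and> t \<le> q \<and> q < r}"
    then have q0: "0 \<le> q" "q \<le> r" using t0 by auto
    have "N q \<in> borel_measurable (F r)" by (rule F_meas_mono[OF q0 N_meas[OF q0(1)]])
    then show "{\<omega>\<in>space (F r). y < N q \<omega>} \<in> sets (F r)" by measurable
  qed
  finally show ?thesis .
qed

lemma Hq_sp: "Hq r \<subseteq> space M" unfolding Hq_def by auto

lemma gr_0: "gr u k 0 = t" unfolding gr_def by simp
lemma gr_top: "gr u k (2^k) = u" unfolding gr_def by simp
lemma gr_mono: "t \<le> u \<Longrightarrow> i \<le> j \<Longrightarrow> gr u k i \<le> gr u k j"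
  unfolding gr_def by (intro add_left_mono divide_right_mono mult_right_mono) auto
lemma gr_ge: "t \<le> u \<Longrightarrow> t \<le> gr u k j"
  using gr_mono[of u 0 j k] gr_0 by simp
lemma gr_le: "t \<le> u \<Longrightarrow> j \<le> 2^k \<Longrightarrow> gr u k j \<le> u"
  using gr_mono[of u j "2^k" k] gr_top by simp
lemma gr_step: "gr u k (Suc j) - gr u k j = (u - t) / 2^k"
  unfolding gr_def by (simp add: field_simps)

lemma jk_P: "PP u k \<omega> (jk u k \<omega>)"
  unfolding jk_def by (rule LeastI[of _ "2^k"]) (simp add: PP_def)
lemma jk_le: "jk u k \<omega> \<le> 2^k"
  unfolding jk_def by (rule Least_le) (simp add: PP_def)
lemma jk_min: "i < jk u k \<omega> \<Longrightarrow> \<not> PP u k \<omega> i"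
  unfolding jk_def by (rule not_less_Least)

lemma jk_eq: "jk u k \<omega> = j \<longleftrightarrow> PP u k \<omega> j \<and> (\<forall>i<j. \<not> PP u k \<omega> i)"
proof
  assume "jk u k \<omega> = j" then show "PP u k \<omega> j \<and> (\<forall>i<j. \<not> PP u k \<omega> i)"
    using jk_P jk_min by blast
next
  assume a: "PP u k \<omega> j \<and> (\<forall>i<j. \<not> PP u k \<omega> i)"
  show "jk u k \<omega> = j" unfolding jk_def
    by (rule Least_equality) (use a in \<open>auto simp: not_less[symmetric]\<close>)
qed

lemma E_eq:
  assumes "j \<le> 2^k"
  shows "E u k j = (if j = 2^k then space M else Hq (gr u k j)) - (\<Union>i\<in>{..<j}. Hq (gr u k i))"
proof -
  have "\<And>i. i < j \<Longrightarrow> PP u k \<omega> i \<longleftrightarrow> \<omega> \<in> Hq (gr u k i)" for \<omega>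
    using assms unfolding PP_def by auto
  then show ?thesis unfolding E_def jk_eq using Hq_sp assms by (auto simp: PP_def)
qed

lemma E_F:
  assumes "t \<le> u" "j \<le> 2^k"
  shows "E u k j \<in> sets (F (gr u k j))"
proof -
  have g0: "0 \<le> gr u k j" using gr_ge[OF assms(1), of k j] t0 by linarith
  have "(if j = 2^k then space M else Hq (gr u k j)) \<in> sets (F (gr u k j))"
    using Hq_F[OF gr_ge[OF assms(1)]] F_space[OF g0] sets.top[of "F (gr u k j)"] by auto
  moreover have "(\<Union>i\<in>{..<j}. Hq (gr u k i)) \<in> sets (F (gr u k j))"
  proof (rule sets.finite_UN)
    fix i assume "i \<in> {..<j}"
    then have "gr u k i \<le> gr u k j" using gr_mono[OF assms(1)] by simp
    then show "Hq (gr u k i) \<in> sets (F (gr u k j))"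
      using F_mono[of "gr u k i" "gr u k j"] Hq_F[OF gr_ge[OF assms(1)]] gr_ge[OF assms(1)] t0
      by (meson order_trans)
  qed simp
  ultimately show ?thesis unfolding E_eq[OF assms(2)] by (rule sets.Diff)
qed

lemma E_M: "t \<le> u \<Longrightarrow> j \<le> 2^k \<Longrightarrow> E u k j \<in> sets M"
  using F_sets[OF _ E_F] gr_ge t0 by (meson order_trans)

lemma E_part: "\<omega> \<in> space M \<Longrightarrow> \<exists>!j. j \<in> {..(2::nat)^k} \<and> \<omega> \<in> E u k j"
  unfolding E_def using jk_le by auto

lemma E_sp: "E u k j \<subseteq> space M" unfolding E_def by auto

lemma Hq_iff:
  assumes "good \<omega>" "\<omega> \<in> space M"
  shows "\<omega> \<in> Hq r \<longleftrightarrow> (\<exists>s. t \<le> s \<and> s < r \<and> y < N s \<omega>)"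
  using cadlag_hit_Q[of "\<lambda>s. N s \<omega>" t r y] assms t0 unfolding Hq_def good_def by auto

lemma grid_conv:
  assumes g: "good \<omega>" and sp: "\<omega> \<in> space M" and tu: "t < u"
  shows "(\<lambda>k. gr u k (jk u k \<omega>)) \<longlonglongrightarrow> rho u \<omega> \<and> (\<forall>k. rho u \<omega> \<le> gr u k (jk u k \<omega>))"
proof (cases "\<exists>s. t \<le> s \<and> s < u \<and> y < N s \<omega>")
  case True
  define \<tau> where "\<tau> = Inf {s. t \<le> s \<and> y < N s \<omega>}"
  have ne: "{s. t \<le> s \<and> y < N s \<omega>} \<noteq> {}" using True by auto
  have lessiff: "\<tau> < r \<longleftrightarrow> (\<exists>s. t \<le> s \<and> s < r \<and> y < N s \<omega>)" for r
    unfolding \<tau>_def by (rule hs_less_iff[OF ne])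
  have \<tau>u: "\<tau> < u" using lessiff True by blast
  have t\<tau>: "t \<le> \<tau>" unfolding \<tau>_def by (rule hs_ge[OF ne])
  have rho: "rho u \<omega> = \<tau>" unfolding rho_def rhop_def \<tau>_def using True by auto
  have PPiff: "PP u k \<omega> j \<longleftrightarrow> (j = 2^k \<or> \<tau> < gr u k j)" for k j
    unfolding PP_def Hq_iff[OF g sp] lessiff ..
  have bnd: "\<tau> < gr u k (jk u k \<omega>) \<and> gr u k (jk u k \<omega>) \<le> \<tau> + (u - t) / 2^k" for k
  proof -
    define j0 where "j0 = jk u k \<omega>"
    have P0: "j0 = 2^k \<or> \<tau> < gr u k j0" using jk_P[of u k \<omega>] unfolding PPiff j0_def .
    have g1: "\<tau> < gr u k j0" using P0 \<tau>u gr_top[of u k] by auto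
    have "j0 \<noteq> 0"
    proof
      assume "j0 = 0"
      then show False using g1 gr_0[of u k] t\<tau> by simp
    qed
    then obtain i where i: "j0 = Suc i" by (cases j0) auto
    have "\<not> PP u k \<omega> i" using jk_min[of i u k \<omega>] i unfolding j0_def by simp
    then have "gr u k i \<le> \<tau>" unfolding PPiff by auto
    then have "gr u k j0 \<le> \<tau> + (u - t) / 2^k" using gr_step[of u k i] i by simp
    then show ?thesis using g1 unfolding j0_def by simp
  qed
  have "(\<lambda>k. gr u k (jk u k \<omega>)) \<longlonglongrightarrow> \<tau>"
  proof (rule tendsto_sandwich[of "\<lambda>k. \<tau>" _ _ "\<lambda>k. \<tau> + (u - t) / 2^k"])
    show "eventually (\<lambda>k. \<tau> \<le> gr u k (jk u k \<omega>)) sequentially" using bnd by (intro always_eventually allI less_imp_le) blast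
    show "eventually (\<lambda>k. gr u k (jk u k \<omega>) \<le> \<tau> + (u - t) / 2^k) sequentially" using bnd by (intro always_eventually allI) blast
    have "(\<lambda>k. (u - t) / 2^k) \<longlonglongrightarrow> 0" by (rule LIMSEQ_divide_realpow_zero) simp
    then show "(\<lambda>k. \<tau> + (u - t) / 2^k) \<longlonglongrightarrow> \<tau>" using tendsto_add[OF tendsto_const[of \<tau>]] by fastforce
  qed simp
  then show ?thesis using rho bnd by (auto intro: less_imp_le)
next
  case False
  have jk: "jk u k \<omega> = 2^k" for k
  proof -
    have "\<not> PP u k \<omega> i" if "i < 2^k" for i
    proof -
      have "gr u k i \<le> u" using gr_le[of u i k] tu that by simp
      then show ?thesis unfolding PP_def Hq_iff[OF g sp] using False that by force
    qed
    then show ?thesis unfolding jk_eq by (simp add: PP_def)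
  qed
  have rho: "rho u \<omega> = u"
  proof (cases "\<exists>s. t \<le> s \<and> s \<le> u \<and> y < N s \<omega>")
    case True
    then obtain s where s: "t \<le> s" "s \<le> u" "y < N s \<omega>" by blast
    then have su: "s = u" using False by force
    have "Inf {s. t \<le> s \<and> y < N s \<omega>} = u"
    proof (rule cInf_eq_minimum)
      show "u \<in> {s. t \<le> s \<and> y < N s \<omega>}" using s su by simp
      fix x assume "x \<in> {s. t \<le> s \<and> y < N s \<omega>}"
      then show "u \<le> x" using False by force
    qed
    then show ?thesis unfolding rho_def rhop_def using True by simp
  next
    case f2: False then show ?thesis unfolding rho_def rhop_def by (rule if_not_P)
  qed
  show ?thesis using jk rho gr_top by simp
qed

end

context kl begin

lemma rho_ge: "t \<le> u \<Longrightarrow> t \<le> rho u \<omega>" unfolding rho_def by (rule rhop_ge)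
lemma rho_le: "t \<le> u \<Longrightarrow> rho u \<omega> \<le> u" unfolding rho_def by (rule rhop_le)

lemma Mn_rc:
  assumes "good \<omega>" "\<omega> \<in> space M" "0 \<le> a"
  shows "((\<lambda>s. Mn n s \<omega>) \<longlongrightarrow> Mn n a \<omega>) (at_right a)"
proof -
  have c: "cadlag (\<lambda>s. N s \<omega>)" using assms(1) unfolding good_def by blast
  have "((\<lambda>s. if TT n \<omega> \<le> ereal s then N (real_of_ereal (TT n \<omega>)) \<omega> else N s \<omega>) \<longlongrightarrow>
        (if TT n \<omega> \<le> ereal a then N (real_of_ereal (TT n \<omega>)) \<omega> else N a \<omega>)) (at_right a)"
    using stopped_rc[OF c assms(3) TT_nonneg[OF assms(2)]] by simp
  then show ?thesis unfolding Mn_def stopped_process_def .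
qed

lemma S1:
  assumes tu: "t < u"
  shows "(\<lambda>\<omega>. indicator B \<omega> * Mn n (rho u \<omega>) \<omega>) \<in> borel_measurable M"
    "integrable M (\<lambda>\<omega>. indicator B \<omega> * Mn n (rho u \<omega>) \<omega>)"
    "(\<integral>\<omega>. indicator B \<omega> * Mn n (rho u \<omega>) \<omega> \<partial>M) = (\<integral>\<omega>. indicator B \<omega> * Mn n t \<omega> \<partial>M)"
proof -
  have tu': "t \<le> u" using tu by simp
  have u0: "0 \<le> u" using t0 tu by linarith
  have grn: "0 \<le> gr u k j" for k j using gr_ge[OF tu', of k j] t0 by linarith
  define X where "X k \<omega> = indicator B \<omega> * (\<Sum>j\<in>{..(2::nat)^k}. indicator (E u k j) \<omega> * Mn n (gr u k j) \<omega>)" for k \<omega>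
  define L where "L \<omega> = indicator B \<omega> * Mn n (rho u \<omega>) \<omega>" for \<omega>
  have sumeq: "(\<Sum>j\<in>{..(2::nat)^k}. indicator (E u k j) \<omega> * Mn n (gr u k j) \<omega>) = Mn n (gr u k (jk u k \<omega>)) \<omega>"
    if "\<omega> \<in> space M" for k \<omega>
  proof -
    have "(\<Sum>j\<in>{..(2::nat)^k}. indicator (E u k j) \<omega> * Mn n (gr u k j) \<omega>)
        = (\<Sum>j\<in>{..(2::nat)^k}. (if j = jk u k \<omega> then Mn n (gr u k j) \<omega> else 0))"
      by (rule sum.cong) (use that in \<open>auto simp: E_def indicator_def\<close>)
    also have "\<dots> = Mn n (gr u k (jk u k \<omega>)) \<omega>" using jk_le[of u k \<omega>] by simp
    finally show ?thesis .
  qed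
  have Xeq: "X k \<omega> = indicator B \<omega> * Mn n (gr u k (jk u k \<omega>)) \<omega>" if "\<omega> \<in> space M" for k \<omega>
    unfolding X_def sumeq[OF that] ..
  have sm: "(\<lambda>\<omega>. \<Sum>j\<in>{..(2::nat)^k}. indicator (E u k j) \<omega> * Mn n (gr u k j) \<omega>) \<in> borel_measurable M" for k
    by (intro borel_measurable_sum borel_measurable_times borel_measurable_indicator E_M Mn_meas grn tu') auto
  have Xm: "X k \<in> borel_measurable M" for k
    unfolding X_def by (intro borel_measurable_times borel_measurable_indicator BM sm)
  have Xn: "0 \<le> X k \<omega>" if "\<omega> \<in> space M" for k \<omega>
    unfolding Xeq[OF that] using Mn_pos[OF that grn, of n k "jk u k \<omega>"] by (simp add: indicator_def)
  have lim: "AE \<omega> in M. (\<lambda>k. X k \<omega>) \<longlonglongrightarrow> L \<omega>"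
    using AE_good AE_space
  proof eventually_elim
    case (elim \<omega>)
    have gc: "(\<lambda>k. gr u k (jk u k \<omega>)) \<longlonglongrightarrow> rho u \<omega>" "\<And>k. rho u \<omega> \<le> gr u k (jk u k \<omega>)"
      using grid_conv[OF elim tu] by auto
    have r0: "0 \<le> rho u \<omega>" using rho_ge[OF tu'] t0 order_trans by blast
    have "(\<lambda>k. Mn n (gr u k (jk u k \<omega>)) \<omega>) \<longlonglongrightarrow> Mn n (rho u \<omega>) \<omega>"
      by (rule rc_seq[OF Mn_rc[OF elim r0] gc])
    then have "(\<lambda>k. indicator B \<omega> * Mn n (gr u k (jk u k \<omega>)) \<omega>) \<longlonglongrightarrow> L \<omega>"
      unfolding L_def by (intro tendsto_mult tendsto_const)
    then show ?case using Xeq[OF elim(2)] by simp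
  qed
  have Lm: "L \<in> borel_measurable M" by (rule ae_lim_meas[OF Xm lim])
  have Xi: "integrable M (X k)" for k
  proof -
    have "integrable M (\<lambda>\<omega>. \<Sum>j\<in>{..(2::nat)^k}. indicator (E u k j) \<omega> * Mn n (gr u k j) \<omega>)"
    proof (rule Bochner_Integration.integrable_sum)
      fix j assume j: "j \<in> {..(2::nat)^k}"
      show "integrable M (\<lambda>\<omega>. indicator (E u k j) \<omega> * Mn n (gr u k j) \<omega>)"
        using integrable_mult_indicator[OF E_M[OF tu'] Mn_int[OF grn]] j by simp
    qed
    from integrable_mult_indicator[OF BM this] show ?thesis unfolding X_def by simp
  qed
  have BE: "B \<inter> E u k j \<in> sets (F (gr u k j))" if "j \<le> 2^k" for k j
  proof (rule sets.Int)
    show "B \<in> sets (F (gr u k j))" using F_mono[OF t0 gr_ge[OF tu'] BF] .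
    show "E u k j \<in> sets (F (gr u k j))" by (rule E_F[OF tu' that])
  qed
  have dosk: "(\<integral>\<omega>. indicator C \<omega> * (\<Sum>j\<in>{..(2::nat)^k}. indicator (E u k j) \<omega> * Mn n (gr u k j) \<omega>) \<partial>M)
      = (\<integral>\<omega>. indicator C \<omega> * Mn n u \<omega> \<partial>M)"
    if "C \<subseteq> space M" "\<And>j. j \<le> 2^k \<Longrightarrow> C \<inter> E u k j \<in> sets (F (gr u k j))" for C k
  proof (rule dos[OF Mn_mart])
    show "\<And>j. j \<in> {..2 ^ k} \<Longrightarrow> 0 \<le> gr u k j \<and> gr u k j \<le> u" using grn gr_le[OF tu'] by auto
    show "\<And>\<omega>. \<omega> \<in> space M \<Longrightarrow> \<exists>!j. j \<in> {..2 ^ k} \<and> \<omega> \<in> E u k j" by (rule E_part)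
  qed (use that E_sp in auto)
  define c where "c = (\<integral>\<omega>. indicator B \<omega> * Mn n u \<omega> \<partial>M)"
  have cX: "integral\<^sup>L M (X k) = c" for k
    unfolding X_def c_def by (rule dosk[OF Bsp BE])
  have tail: "(\<integral>\<omega>. X k \<omega> * indicator {\<omega>\<in>space M. X k \<omega> > K} \<omega> \<partial>M)
          \<le> (\<integral>\<omega>. Mn n u \<omega> * indicator {\<omega>\<in>space M. X k \<omega> > K} \<omega> \<partial>M)" if K: "K > 0" for k K
  proof -
    define C where "C = {\<omega>\<in>space M. X k \<omega> > K}"
    have CB: "C \<subseteq> B" unfolding C_def using K by (auto simp: X_def indicator_def split: if_splits)
    have CE: "C \<inter> E u k j \<in> sets (F (gr u k j))" if j: "j \<le> 2^k" for j
    proof -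
      have sp: "space (F (gr u k j)) = space M" by (rule F_space[OF grn])
      have "C \<inter> E u k j = (B \<inter> E u k j) \<inter> {\<omega>\<in>space (F (gr u k j)). K < Mn n (gr u k j) \<omega>}"
        unfolding sp C_def using Xeq K by (auto simp: E_def indicator_def of_bool_def split: if_splits)
      also have "\<dots> \<in> sets (F (gr u k j))"
      proof (rule sets.Int[OF BE[OF j]])
        have [measurable]: "Mn n (gr u k j) \<in> borel_measurable (F (gr u k j))" by (rule Mn_measF[OF grn])
        show "{\<omega>\<in>space (F (gr u k j)). K < Mn n (gr u k j) \<omega>} \<in> sets (F (gr u k j))" by measurable
      qed
      finally show ?thesis .
    qed
    have "(\<integral>\<omega>. X k \<omega> * indicator C \<omega> \<partial>M)
        = (\<integral>\<omega>. indicator C \<omega> * (\<Sum>j\<in>{..(2::nat)^k}. indicator (E u k j) \<omega> * Mn n (gr u k j) \<omega>) \<partial>M)"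
      using CB by (intro Bochner_Integration.integral_cong) (auto simp: X_def indicator_def)
    also have "\<dots> = (\<integral>\<omega>. indicator C \<omega> * Mn n u \<omega> \<partial>M)"
      by (rule dosk) (use CE in \<open>auto simp: C_def\<close>)
    finally show ?thesis unfolding C_def by (simp add: mult.commute)
  qed
  note UIL = ui_limit[OF Xm Xn Lm lim Mn_int[OF u0] Mn_pos[OF _ u0, THEN less_imp_le] Xi cX tail]
  have UI: "integrable M L" "integral\<^sup>L M L = c"
    using UIL by auto
  show "L \<in> borel_measurable M" "integrable M L" using Lm UI by (auto simp: L_def)
  have "c = (\<integral>\<omega>. indicator B \<omega> * Mn n t \<omega> \<partial>M)"
    unfolding c_def by (rule mart_int[OF Mn_mart t0 tu' BF])
  then show "(\<integral>\<omega>. indicator B \<omega> * Mn n (rho u \<omega>) \<omega> \<partial>M) = (\<integral>\<omega>. indicator B \<omega> * Mn n t \<omega> \<partial>M)"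
    using UI unfolding L_def by simp
qed

end

context kl begin

lemma good_parts:
  assumes "good \<omega>"
  shows "cadlag (\<lambda>s. N s \<omega>)" "nojump (\<lambda>s. N s \<omega>)" "((\<lambda>s. N s \<omega>) \<longlongrightarrow> 0) at_top"
    "(\<lambda>n. TT n \<omega>) \<longlonglongrightarrow> \<infinity>"
  using assms unfolding good_def nojump_def by blast+

lemma rsB: "\<omega> \<in> B \<Longrightarrow> rs (\<lambda>s. N s \<omega>) t \<le> y"
  using Bs unfolding running_sup_def rs_def by blast

lemma boundB:
  assumes "good \<omega>" "\<omega> \<in> B" "t \<le> u" "0 \<le> s" "s \<le> rho u \<omega>"
  shows "N s \<omega> \<le> y"
  using rhop_bound[OF good_parts(1,2)[OF assms(1)] t0 assms(3) rsB[OF assms(2)] assms(4)] assms(5)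
  unfolding rho_def by blast

lemma Mn_eventually:
  assumes "good \<omega>"
  shows "eventually (\<lambda>n. \<forall>s\<le>u. Mn n s \<omega> = N s \<omega>) sequentially"
proof -
  have "eventually (\<lambda>n. TT n \<omega> > ereal u) sequentially"
    using good_parts(4)[OF assms] by (rule order_tendstoD) simp
  then show ?thesis
    by eventually_elim (auto simp: Mn_def stopped_process_def dest: order.strict_trans2[rotated])
qed

lemma S2:
  assumes tu: "t < u"
  shows "(\<lambda>\<omega>. indicator B \<omega> * N (rho u \<omega>) \<omega>) \<in> borel_measurable M"
    "(\<integral>\<omega>. indicator B \<omega> * N (rho u \<omega>) \<omega> \<partial>M) = (\<integral>\<omega>. indicator B \<omega> * N t \<omega> \<partial>M)"
proof -
  have tu': "t \<le> u" using tu by simp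
  have bnd: "norm (indicator B \<omega> * Mn n s \<omega>) \<le> y"
    if pr: "good \<omega>" "\<omega> \<in> space M" "0 \<le> s" "s \<le> rho u \<omega>" for \<omega> n s
  proof (cases "\<omega> \<in> B")
    case True
    obtain s' where s': "0 \<le> s'" "s' \<le> s" "Mn n s \<omega> = N s' \<omega>" using Mn_val[OF pr(2,3)] by blast
    have "N s' \<omega> \<le> y" using boundB[OF pr(1) True tu' s'(1)] s'(2) pr(4) by linarith
    moreover have "0 < N s' \<omega>" using N_pos[OF s'(1) pr(2)] .
    ultimately show ?thesis using True s'(3) by simp
  qed (use y0 in simp)
  have conv: "AE \<omega> in M. (\<lambda>n. indicator B \<omega> * Mn n s \<omega>) \<longlonglongrightarrow> indicator B \<omega> * N s \<omega>" if "s \<le> u" for s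
    using AE_good
  proof eventually_elim
    case (elim \<omega>)
    have "eventually (\<lambda>n. indicator B \<omega> * Mn n s \<omega> = indicator B \<omega> * N s \<omega>) sequentially"
      using Mn_eventually[OF elim, of u] by eventually_elim (use that in auto)
    then show ?case by (rule tendsto_eventually)
  qed
  have conv2: "AE \<omega> in M. (\<lambda>n. indicator B \<omega> * Mn n (rho u \<omega>) \<omega>) \<longlonglongrightarrow> indicator B \<omega> * N (rho u \<omega>) \<omega>"
    using AE_good
  proof eventually_elim
    case (elim \<omega>)
    have "eventually (\<lambda>n. indicator B \<omega> * Mn n (rho u \<omega>) \<omega> = indicator B \<omega> * N (rho u \<omega>) \<omega>) sequentially"
      using Mn_eventually[OF elim, of u] by eventually_elim (use rho_le[OF tu'] in auto)
    then show ?case by (rule tendsto_eventually)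
  qed
  show meas: "(\<lambda>\<omega>. indicator B \<omega> * N (rho u \<omega>) \<omega>) \<in> borel_measurable M"
    by (rule ae_lim_meas[OF S1(1)[OF tu] conv2])
  have r0: "0 \<le> rho u \<omega>" for \<omega> using rho_ge[OF tu', of \<omega>] t0 by linarith
  have l1: "(\<lambda>n. \<integral>\<omega>. indicator B \<omega> * Mn n (rho u \<omega>) \<omega> \<partial>M) \<longlonglongrightarrow> (\<integral>\<omega>. indicator B \<omega> * N (rho u \<omega>) \<omega> \<partial>M)"
  proof (rule integral_dominated_convergence[where w="\<lambda>_. y"])
    show "AE \<omega> in M. norm (indicator B \<omega> * Mn n (rho u \<omega>) \<omega>) \<le> y" for n
      using AE_good AE_space by eventually_elim (rule bnd, auto intro: r0)
  qed (use meas S1(1)[OF tu] conv2 in auto)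
  have l2: "(\<lambda>n. \<integral>\<omega>. indicator B \<omega> * Mn n t \<omega> \<partial>M) \<longlonglongrightarrow> (\<integral>\<omega>. indicator B \<omega> * N t \<omega> \<partial>M)"
  proof (rule integral_dominated_convergence[where w="\<lambda>_. y"])
    show "AE \<omega> in M. norm (indicator B \<omega> * Mn n t \<omega>) \<le> y" for n
      using AE_good AE_space by eventually_elim (rule bnd, auto intro: rho_ge[OF tu'] t0)
    show "(\<lambda>\<omega>. indicator B \<omega> * N t \<omega>) \<in> borel_measurable M"
      using N_measM[OF t0] BM by measurable
    show "(\<lambda>\<omega>. indicator B \<omega> * Mn n t \<omega>) \<in> borel_measurable M" for n
      using Mn_meas[OF t0] BM by measurable
  qed (use conv[OF tu'] in auto)
  have "(\<lambda>n. \<integral>\<omega>. indicator B \<omega> * Mn n (rho u \<omega>) \<omega> \<partial>M) = (\<lambda>n. \<integral>\<omega>. indicator B \<omega> * Mn n t \<omega> \<partial>M)"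
    using S1(3)[OF tu] by simp
  with l1 have "(\<lambda>n. \<integral>\<omega>. indicator B \<omega> * Mn n t \<omega> \<partial>M) \<longlonglongrightarrow> (\<integral>\<omega>. indicator B \<omega> * N (rho u \<omega>) \<omega> \<partial>M)"
    by simp
  then show "(\<integral>\<omega>. indicator B \<omega> * N (rho u \<omega>) \<omega> \<partial>M) = (\<integral>\<omega>. indicator B \<omega> * N t \<omega> \<partial>M)"
    using l2 by (rule LIMSEQ_unique)
qed

definition Hall :: "'a set" where
  "Hall = {\<omega>\<in>space M. \<exists>q\<in>\<rat>. t \<le> q \<and> y < N q \<omega>}"

lemma Hall_M: "Hall \<in> sets M"
proof -
  have "Hall = (\<Union>q\<in>{q. q \<in> \<rat> \<and> t \<le> q}. {\<omega>\<in>space M. y < N q \<omega>})"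
    unfolding Hall_def by auto
  also have "\<dots> \<in> sets M"
  proof (rule sets.countable_UN'')
    show "countable {q. q \<in> \<rat> \<and> t \<le> q}"
      by (rule countable_subset[OF _ countable_rat]) auto
    fix q assume q: "q \<in> {q. q \<in> \<rat> \<and> t \<le> q}"
    then have q0: "0 \<le> q" using t0 by auto
    have [measurable]: "N q \<in> borel_measurable M" by (rule N_measM[OF q0])
    show "{\<omega>\<in>space M. y < N q \<omega>} \<in> sets M" by measurable
  qed
  finally show ?thesis .
qed

lemma S3: "y * prob (B \<inter> Hall) = (\<integral>\<omega>. indicator B \<omega> * N t \<omega> \<partial>M)"
proof -
  define u where "u m = (t + 1) + real m" for m :: nat
  have tu: "t < u m" for m unfolding u_def by simp
  have ut: "filterlim u at_top sequentially"
    unfolding u_def by (rule filterlim_tendsto_add_at_top[OF tendsto_const filterlim_real_sequentially])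
  define f where "f \<omega> = y * indicator (B \<inter> Hall) \<omega>" for \<omega>
  have lim: "AE \<omega> in M. (\<lambda>m. indicator B \<omega> * N (rho (u m) \<omega>) \<omega>) \<longlonglongrightarrow> f \<omega>"
    using AE_good AE_space
  proof eventually_elim
    case (elim \<omega>)
    show ?case
    proof (cases "\<omega> \<in> B")
      case False then show ?thesis by (simp add: f_def)
    next
      case B: True
      show ?thesis
      proof (cases "\<exists>s. t \<le> s \<and> y < N s \<omega>")
        case True
        then obtain s where s: "t \<le> s" "y < N s \<omega>" by blast
        have ne: "{s. t \<le> s \<and> y < N s \<omega>} \<noteq> {}" using s by auto
        have H: "\<omega> \<in> Hall" unfolding Hall_def
          using cadlag_hit_Q_all[OF good_parts(1)[OF elim(1)] t0, of y] True elim(2) by auto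
        have val: "N (Inf {s. t \<le> s \<and> y < N s \<omega>}) \<omega> = y"
          using hs_at[OF good_parts(1,2)[OF elim(1)] t0 rsB[OF B] ne] .
        have "eventually (\<lambda>m. s \<le> u m) sequentially"
          using filterlim_at_top[THEN iffD1, OF ut] by blast
        then have "eventually (\<lambda>m. indicator B \<omega> * N (rho (u m) \<omega>) \<omega> = f \<omega>) sequentially"
        proof eventually_elim
          case (elim m)
          then have "rho (u m) \<omega> = Inf {s. t \<le> s \<and> y < N s \<omega>}"
            unfolding rho_def rhop_def using s by auto
          then show ?case using val B H by (simp add: f_def)
        qed
        then show ?thesis by (rule tendsto_eventually)
      next
        case False
        have H: "\<omega> \<notin> Hall" unfolding Hall_def using False by auto
        have r: "rho (u m) \<omega> = u m" for m
          unfolding rho_def rhop_def using False by auto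
        have "(\<lambda>m. N (u m) \<omega>) \<longlonglongrightarrow> 0"
          using filterlim_compose[OF good_parts(3)[OF elim(1)] ut] .
        then show ?thesis using B H r by (simp add: f_def)
      qed
    qed
  qed
  have fm: "f \<in> borel_measurable M" unfolding f_def using BM Hall_M by measurable
  have "(\<lambda>m. \<integral>\<omega>. indicator B \<omega> * N (rho (u m) \<omega>) \<omega> \<partial>M) \<longlonglongrightarrow> integral\<^sup>L M f"
  proof (rule integral_dominated_convergence[where w="\<lambda>_. y"])
    show "AE \<omega> in M. norm (indicator B \<omega> * N (rho (u m) \<omega>) \<omega>) \<le> y" for m
      using AE_good AE_space
    proof eventually_elim
      case (elim \<omega>)
      show ?case
      proof (cases "\<omega> \<in> B")
        case True
        have tu': "t \<le> u m" using tu[of m] by simp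
        have r0: "0 \<le> rho (u m) \<omega>" using rho_ge[OF tu', of \<omega>] t0 by linarith
        have "N (rho (u m) \<omega>) \<omega> \<le> y" by (rule boundB[OF elim(1) True tu' r0 order_refl])
        moreover have "0 < N (rho (u m) \<omega>) \<omega>" by (rule N_pos[OF r0 elim(2)])
        ultimately show ?thesis using True by simp
      qed (use y0 in simp)
    qed
  qed (use fm S2(1)[OF tu] lim in auto)
  moreover have "(\<lambda>m. \<integral>\<omega>. indicator B \<omega> * N (rho (u m) \<omega>) \<omega> \<partial>M) = (\<lambda>m. \<integral>\<omega>. indicator B \<omega> * N t \<omega> \<partial>M)"
    using S2(2)[OF tu] by simp
  ultimately have "(\<lambda>m. \<integral>\<omega>. indicator B \<omega> * N t \<omega> \<partial>M) \<longlonglongrightarrow> integral\<^sup>L M f"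
    by simp
  then have "integral\<^sup>L M f = (\<integral>\<omega>. indicator B \<omega> * N t \<omega> \<partial>M)"
    using tendsto_const by (rule LIMSEQ_unique)
  moreover have "integral\<^sup>L M f = y * prob (B \<inter> Hall)"
    unfolding f_def using BM Hall_M by simp
  ultimately show ?thesis by simp
qed

end

lemma L1:
  assumes a: "0 < a" "a \<le> b"
  shows "(\<integral>\<^sup>+x. ennreal (indicator {a..<b} x * (1/x)) \<partial>lborel) = ennreal (ln b - ln a)"
proof -
  have "((\<lambda>x. 1/x) has_integral (ln b - ln a)) {a..b}"
  proof (rule fundamental_theorem_of_calculus[OF a(2)])
    fix x assume x: "x \<in> {a..b}"
    then have "x > 0" using a by simp
    then have "(ln has_real_derivative 1/x) (at x within {a..b})"
      by (auto intro!: derivative_eq_intros)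
    then show "(ln has_vector_derivative 1/x) (at x within {a..b})"
      by (simp add: has_real_derivative_iff_has_vector_derivative)
  qed
  then have "((\<lambda>x. if x \<in> {a..b} then 1/x else 0) has_integral (ln b - ln a)) UNIV"
    by (simp only: has_integral_restrict_UNIV)
  moreover have "(\<lambda>x. if x \<in> {a..b} then 1/x else 0) = (\<lambda>x. indicator {a..b} x * (1/x :: real))"
    by (auto simp: indicator_def)
  ultimately have hi: "((\<lambda>x. indicator {a..b} x * (1/x :: real)) has_integral (ln b - ln a)) UNIV" by simp
  have "(\<integral>\<^sup>+x. ennreal (indicator {a..b} x * (1/x)) \<partial>lborel) = ennreal (ln b - ln a)"
    by (rule nn_integral_has_integral_lborel[OF _ _ hi]) (use a in \<open>auto simp: indicator_def\<close>)
  moreover have "(\<integral>\<^sup>+x. ennreal (indicator {a..<b} x * (1/x)) \<partial>lborel) = (\<integral>\<^sup>+x. ennreal (indicator {a..b} x * (1/x)) \<partial>lborel)"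
    by (rule nn_integral_cong_AE) (use AE_lborel_singleton[of b] in \<open>eventually_elim, auto simp: indicator_def\<close>)
  ultimately show ?thesis by simp
qed

lemma L2:
  assumes a: "0 < a"
  shows "(\<integral>\<^sup>+x. ennreal (indicator {a..} x * (1/x^2)) \<partial>lborel) = ennreal (1/a)"
proof -
  have "(\<integral>\<^sup>+x. ennreal (1/x^2) * indicator {a..} x \<partial>lborel) = ennreal (0 - (- 1/a))"
  proof (rule nn_integral_FTC_atLeast[where F="\<lambda>x. - 1/x"])
    show "(\<lambda>x::real. 1/x^2) \<in> borel_measurable borel" by measurable
    fix x :: real assume "a \<le> x"
    then have "x > 0" using a by simp
    then show "((\<lambda>x. - 1/x) has_real_derivative 1/x^2) (at x)"
      by (auto intro!: derivative_eq_intros simp: power2_eq_square field_simps)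
  next
    show "((\<lambda>x::real. - 1/x) \<longlongrightarrow> 0) at_top"
      using tendsto_minus[OF tendsto_divide_0[OF tendsto_const filterlim_ident[THEN filterlim_at_top_imp_at_infinity]], of 1]
      by simp
  qed simp
  moreover have "\<And>x. ennreal (indicator {a..} x * (1/x^2)) = ennreal (1/x^2) * indicator {a..} x"
    by (simp add: indicator_def)
  ultimately show ?thesis by simp
qed

lemma ereal_SUP_real:
  fixes f :: "'b \<Rightarrow> real"
  assumes "A \<noteq> {}" "bdd_above (f ` A)"
  shows "(SUP a\<in>A. ereal (f a)) = ereal (SUP a\<in>A. f a)"
proof -
  obtain a0 where a0: "a0 \<in> A" using assms(1) by blast
  obtain c where c: "\<And>a. a \<in> A \<Longrightarrow> f a \<le> c" using assms(2) unfolding bdd_above_def by auto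
  have lo: "ereal (f a0) \<le> (SUP a\<in>A. ereal (f a))" using a0 by (rule SUP_upper2) simp
  have hi: "(SUP a\<in>A. ereal (f a)) \<le> ereal c" using c by (intro SUP_least) simp
  have "\<bar>SUP a\<in>A. ereal (f a)\<bar> \<noteq> \<infinity>" using lo hi by auto
  then show ?thesis by (rule ereal_SUP[symmetric])
qed

definition Q0 :: "real set" where "Q0 = {q. q \<in> \<rat> \<and> 0 \<le> q}"

lemma countable_Q0: "countable Q0"
  unfolding Q0_def by (rule countable_subset[OF _ countable_rat]) auto

lemma sup_Q0:
  assumes "cadlag f" "bdd_above (f ` {0..})"
  shows "(SUP s\<in>{0..}. f s) = (SUP q\<in>Q0. f q)"
proof -
  have ne: "Q0 \<noteq> {}" unfolding Q0_def by (intro exI[of _ 0] notI) auto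
  have bdd2: "bdd_above (f ` Q0)" using assms(2) by (rule bdd_above_mono) (auto simp: Q0_def)
  show ?thesis
  proof (rule antisym)
    show "(SUP s\<in>{0..}. f s) \<le> (SUP q\<in>Q0. f q)"
    proof (rule cSUP_least)
      fix s :: real assume s: "s \<in> {0..}"
      show "f s \<le> (SUP q\<in>Q0. f q)"
      proof (rule ccontr)
        assume "\<not> f s \<le> (SUP q\<in>Q0. f q)"
        then have "f s > (SUP q\<in>Q0. f q)" by simp
        then obtain q where q: "q \<in> \<rat>" "s < q" "f q > (SUP q\<in>Q0. f q)"
          using cadlag_dense_gt[OF assms(1), of s "s+1"] s by force
        then have "q \<in> Q0" using s by (auto simp: Q0_def)
        then have "f q \<le> (SUP q\<in>Q0. f q)" using bdd2 by (rule cSUP_upper)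
        then show False using q by simp
      qed
    qed simp
    show "(SUP q\<in>Q0. f q) \<le> (SUP s\<in>{0..}. f s)"
      using ne assms(2) by (intro cSUP_subset_mono) (auto simp: Q0_def)
  qed
qed

context ctx begin

lemma St_rs: "running_sup N t \<omega> = rs (\<lambda>s. N s \<omega>) t"
  unfolding running_sup_def rs_def ..

lemma Sinf_rs: "terminal_sup N \<omega> = Lim at_top (rs (\<lambda>s. N s \<omega>))"
  unfolding terminal_sup_def running_sup_def rs_def ..

lemma St_good:
  assumes "good \<omega>" "0 \<le> t"
  shows "running_sup N t \<omega> = real_of_ereal (SUP q\<in>QI t. ereal (N q \<omega>))"
proof -
  have c: "cadlag (\<lambda>s. N s \<omega>)" using assms unfolding good_def by blast
  have bdd: "bdd_above ((\<lambda>s. N s \<omega>) ` QI t)"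
    using cadlag_bdd[OF c, of t] QI_sub[OF assms(2)] by (meson bdd_above_mono image_mono)
  have ne: "QI t \<noteq> {}" by (auto simp: QI_def)
  show ?thesis unfolding St_rs rs_QI[OF c assms(2)] ereal_SUP_real[OF ne bdd] by simp
qed

lemma Sinf_good:
  assumes "good \<omega>"
  shows "terminal_sup N \<omega> = (SUP s\<in>{0..}. N s \<omega>)"
    "terminal_sup N \<omega> = real_of_ereal (SUP q\<in>Q0. ereal (N q \<omega>))"
proof -
  have c: "cadlag (\<lambda>s. N s \<omega>)" and z: "((\<lambda>s. N s \<omega>) \<longlongrightarrow> 0) at_top"
    using assms unfolding good_def by blast+
  show 1: "terminal_sup N \<omega> = (SUP s\<in>{0..}. N s \<omega>)"
    unfolding Sinf_rs by (rule rs_Lim[OF c z])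
  have bdd: "bdd_above ((\<lambda>s. N s \<omega>) ` {0..})" by (rule cadlag_bdd_all[OF c z])
  have bdd2: "bdd_above ((\<lambda>s. N s \<omega>) ` Q0)" using bdd by (rule bdd_above_mono) (auto simp: Q0_def)
  have ne: "Q0 \<noteq> {}" unfolding Q0_def by (intro exI[of _ 0] notI) auto
  show "terminal_sup N \<omega> = real_of_ereal (SUP q\<in>Q0. ereal (N q \<omega>))"
    unfolding 1 sup_Q0[OF c bdd] ereal_SUP_real[OF ne bdd2] by simp
qed

lemma St_measF:
  assumes t: "0 \<le> t"
  shows "running_sup N t \<in> borel_measurable (F t)"
proof (rule ae_meas)
  show "AE \<omega> in M. running_sup N t \<omega> = real_of_ereal (SUP q\<in>QI t. ereal (N q \<omega>))"
    using AE_good by eventually_elim (rule St_good[OF _ t])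
  have [measurable]: "(\<lambda>\<omega>. ereal (N q \<omega>)) \<in> borel_measurable (F t)" if "q \<in> QI t" for q
  proof -
    have q: "0 \<le> q" "q \<le> t" using that QI_sub[OF t] by auto
    have "N q \<in> borel_measurable (F t)" by (rule F_meas_mono[OF q N_meas[OF q(1)]])
    then show ?thesis by measurable
  qed
  have "(\<lambda>\<omega>. SUP q\<in>QI t. ereal (N q \<omega>)) \<in> borel_measurable (F t)"
    by (rule borel_measurable_SUP[OF countable_QI]) simp
  then show "(\<lambda>\<omega>. real_of_ereal (SUP q\<in>QI t. ereal (N q \<omega>))) \<in> borel_measurable (F t)"
    by measurable
  show "space (F t) = space M" by (rule F_space[OF t])
qed (rule F_cpl[OF t])

lemma St_measM: "0 \<le> t \<Longrightarrow> running_sup N t \<in> borel_measurable M"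
  by (rule F_meas_M[OF _ St_measF])

lemma Sinf_meas: "terminal_sup N \<in> borel_measurable M"
proof (rule ae_meas)
  show "AE \<omega> in M. terminal_sup N \<omega> = real_of_ereal (SUP q\<in>Q0. ereal (N q \<omega>))"
    using AE_good by eventually_elim (rule Sinf_good(2))
  have [measurable]: "(\<lambda>\<omega>. ereal (N q \<omega>)) \<in> borel_measurable M" if "q \<in> Q0" for q
  proof -
    have "N q \<in> borel_measurable M" using that by (intro N_measM) (auto simp: Q0_def)
    then show ?thesis by measurable
  qed
  have "(\<lambda>\<omega>. SUP q\<in>Q0. ereal (N q \<omega>)) \<in> borel_measurable M"
    by (rule borel_measurable_SUP[OF countable_Q0]) simp
  then show "(\<lambda>\<omega>. real_of_ereal (SUP q\<in>Q0. ereal (N q \<omega>))) \<in> borel_measurable M"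
    by measurable
qed (auto intro: M_cpl)

lemma St_ge_N: "good \<omega> \<Longrightarrow> 0 \<le> s \<Longrightarrow> s \<le> t \<Longrightarrow> N s \<omega> \<le> running_sup N t \<omega>"
  unfolding St_rs good_def by (intro rs_ge) auto

lemma St_ge1: "good \<omega> \<Longrightarrow> \<omega> \<in> space M \<Longrightarrow> 0 \<le> t \<Longrightarrow> 1 \<le> running_sup N t \<omega>"
  using St_ge_N[of \<omega> 0 t] N0 by auto

lemma St_mono: "good \<omega> \<Longrightarrow> 0 \<le> s \<Longrightarrow> s \<le> t \<Longrightarrow> running_sup N s \<omega> \<le> running_sup N t \<omega>"
  unfolding St_rs good_def by (intro rs_mono) auto

lemma Sinf_bdd: "good \<omega> \<Longrightarrow> bdd_above ((\<lambda>s. N s \<omega>) ` {0..})"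
  unfolding good_def by (intro cadlag_bdd_all) auto

lemma St_le_Sinf: "good \<omega> \<Longrightarrow> 0 \<le> t \<Longrightarrow> running_sup N t \<omega> \<le> terminal_sup N \<omega>"
  unfolding Sinf_good(1)
  by (subst St_rs, rule rs_le) (auto intro: cSUP_upper Sinf_bdd)

lemma Sinf_gt_iff: "good \<omega> \<Longrightarrow> x < terminal_sup N \<omega> \<longleftrightarrow> (\<exists>s\<ge>0. x < N s \<omega>)"
proof -
  assume g: "good \<omega>"
  have ne: "{0::real..} \<noteq> {}" by auto
  show ?thesis unfolding Sinf_good(1)[OF g] using less_cSUP_iff[OF ne Sinf_bdd[OF g], of x] by auto
qed

lemma S0: "\<omega> \<in> space M \<Longrightarrow> running_sup N 0 \<omega> = 1"
  unfolding running_sup_def using N0 by simp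

end

context ctx begin

lemma pair_M_lborel: "pair_sigma_finite M lborel"
  unfolding pair_sigma_finite_def using sigma_finite_lborel prob_space_imp_sigma_finite[OF prob] by blast

lemma inner_eq:
  assumes t: "0 \<le> t" and A: "A \<in> sets (F t)" and x: "0 < x"
  shows "(\<integral>\<^sup>+\<omega>. (if \<omega> \<in> A \<and> running_sup N t \<omega> \<le> x \<and> x < terminal_sup N \<omega> \<and> 0 < x then ennreal (1/x) else 0) \<partial>M)
       = (\<integral>\<^sup>+\<omega>. (if \<omega> \<in> A \<and> running_sup N t \<omega> \<le> x \<and> 0 < x then ennreal (N t \<omega> / x^2) else 0) \<partial>M)"
proof -
  have AM: "A \<in> sets M" by (rule F_sets[OF t A])
  have [measurable]: "running_sup N t \<in> borel_measurable M" by (rule St_measM[OF t])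
  have [measurable]: "terminal_sup N \<in> borel_measurable M" by (rule Sinf_meas)
  have [measurable]: "N t \<in> borel_measurable M" by (rule N_measM[OF t])
  have [measurable]: "A \<in> sets M" by (rule AM)
  define Bx where "Bx = A \<inter> {\<omega>\<in>space M. running_sup N t \<omega> \<le> x}"
  have BxF: "Bx \<in> sets (F t)"
  proof -
    have [measurable]: "running_sup N t \<in> borel_measurable (F t)" by (rule St_measF[OF t])
    have "{\<omega>\<in>space (F t). running_sup N t \<omega> \<le> x} \<in> sets (F t)" by measurable
    then show ?thesis unfolding Bx_def F_space[OF t] using A by (rule sets.Int[rotated])
  qed
  have BxM: "Bx \<in> sets M" by (rule F_sets[OF t BxF])
  have kl: "kl M F N t x Bx"
    unfolding kl_def kl_axioms_def using ctx_axioms t x BxF by (auto simp: Bx_def)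
  interpret K: kl M F N t x Bx by (rule kl)
  define D where "D = {\<omega>\<in>space M. \<omega> \<in> A \<and> running_sup N t \<omega> \<le> x \<and> x < terminal_sup N \<omega>}"
  have DM: "D \<in> sets M" unfolding D_def by measurable
  have "(\<integral>\<^sup>+\<omega>. (if \<omega> \<in> A \<and> running_sup N t \<omega> \<le> x \<and> x < terminal_sup N \<omega> \<and> 0 < x then ennreal (1/x) else 0) \<partial>M)
      = (\<integral>\<^sup>+\<omega>. ennreal (1/x) * indicator D \<omega> \<partial>M)"
    by (rule nn_integral_cong) (use x in \<open>auto simp: D_def indicator_def\<close>)
  also have "\<dots> = ennreal (1/x) * emeasure M D" by (rule nn_integral_cmult_indicator[OF DM])
  also have "emeasure M D = emeasure M (Bx \<inter> K.Hall)"
  proof (rule emeasure_eq_AE)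
    show "AE \<omega> in M. (\<omega> \<in> D) = (\<omega> \<in> Bx \<inter> K.Hall)"
      using AE_good AE_space
    proof eventually_elim
      case (elim \<omega>)
      have c: "cadlag (\<lambda>s. N s \<omega>)" using elim(1) unfolding good_def by blast
      have "x < terminal_sup N \<omega> \<longleftrightarrow> (\<exists>q\<in>\<rat>. t \<le> q \<and> x < N q \<omega>)" if le: "running_sup N t \<omega> \<le> x"
      proof -
        have "x < terminal_sup N \<omega> \<longleftrightarrow> (\<exists>s\<ge>0. x < N s \<omega>)" by (rule Sinf_gt_iff[OF elim(1)])
        also have "\<dots> \<longleftrightarrow> (\<exists>s. t \<le> s \<and> x < N s \<omega>)"
        proof
          assume "\<exists>s\<ge>0. x < N s \<omega>"
          then obtain s where s: "0 \<le> s" "x < N s \<omega>" by blast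
          have "\<not> s \<le> t"
          proof
            assume "s \<le> t"
            then have "N s \<omega> \<le> running_sup N t \<omega>" by (rule St_ge_N[OF elim(1) s(1)])
            then show False using s le by linarith
          qed
          then show "\<exists>s. t \<le> s \<and> x < N s \<omega>" using s by (intro exI[of _ s]) auto
        next
          assume "\<exists>s. t \<le> s \<and> x < N s \<omega>"
          then show "\<exists>s\<ge>0. x < N s \<omega>" using t by (meson order_trans)
        qed
        also have "\<dots> \<longleftrightarrow> (\<exists>q\<in>\<rat>. t \<le> q \<and> x < N q \<omega>)" by (rule cadlag_hit_Q_all[OF c t])
        finally show ?thesis .
      qed
      then show ?case using elim(2) unfolding D_def Bx_def K.Hall_def by blast
    qed
  qed (use DM BxM K.Hall_M in auto)
  also have "emeasure M (Bx \<inter> K.Hall) = ennreal (prob (Bx \<inter> K.Hall))"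
    by (rule emeasure_eq_measure)
  finally have H: "(\<integral>\<^sup>+\<omega>. (if \<omega> \<in> A \<and> running_sup N t \<omega> \<le> x \<and> x < terminal_sup N \<omega> \<and> 0 < x then ennreal (1/x) else 0) \<partial>M)
      = ennreal (prob (Bx \<inter> K.Hall) / x)"
    using x by (simp add: ennreal_mult''[symmetric])
  have bndB: "norm (indicator Bx \<omega> * N t \<omega> / x^2) \<le> 1/x" if g: "good \<omega>" and sp: "\<omega> \<in> space M" for \<omega>
  proof (cases "\<omega> \<in> Bx")
    case True
    have "0 < N t \<omega>" by (rule N_pos[OF t sp])
    moreover have "N t \<omega> \<le> x"
    proof -
      have "N t \<omega> \<le> running_sup N t \<omega>" by (rule St_ge_N[OF g t order_refl])
      then show ?thesis using True unfolding Bx_def by auto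
    qed
    ultimately show ?thesis using True x by (simp add: power2_eq_square field_simps)
  qed (use x in simp)
  have intB: "integrable M (\<lambda>\<omega>. indicator Bx \<omega> * N t \<omega> / x^2)"
  proof (rule Bochner_Integration.integrable_bound[of _ "\<lambda>_. 1/x"])
    show "(\<lambda>\<omega>. indicator Bx \<omega> * N t \<omega> / x^2) \<in> borel_measurable M" using BxM by measurable
    show "AE \<omega> in M. norm (indicator Bx \<omega> * N t \<omega> / x^2) \<le> norm (1/x)"
      using AE_good AE_space by eventually_elim (use bndB x in auto)
  qed simp
  have "(\<integral>\<^sup>+\<omega>. (if \<omega> \<in> A \<and> running_sup N t \<omega> \<le> x \<and> 0 < x then ennreal (N t \<omega> / x^2) else 0) \<partial>M)
      = (\<integral>\<^sup>+\<omega>. ennreal (indicator Bx \<omega> * N t \<omega> / x^2) \<partial>M)"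
    by (rule nn_integral_cong) (use x in \<open>auto simp: Bx_def indicator_def\<close>)
  also have "\<dots> = ennreal (\<integral>\<omega>. indicator Bx \<omega> * N t \<omega> / x^2 \<partial>M)"
  proof (rule nn_integral_eq_integral[OF intB])
    show "AE \<omega> in M. 0 \<le> indicator Bx \<omega> * N t \<omega> / x^2"
      using AE_space
    proof eventually_elim
      case (elim \<omega>)
      have "0 \<le> N t \<omega>" using N_pos[OF t elim] by simp
      then show ?case by (simp add: indicator_def)
    qed
  qed
  also have "(\<integral>\<omega>. indicator Bx \<omega> * N t \<omega> / x^2 \<partial>M) = (\<integral>\<omega>. indicator Bx \<omega> * N t \<omega> \<partial>M) / x^2"
    by simp
  also have "\<dots> = prob (Bx \<inter> K.Hall) / x"
    unfolding K.S3[symmetric] using x by (simp add: power2_eq_square)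
  finally show ?thesis using H by simp
qed

end

context ctx begin

lemma CI:
  assumes t: "0 \<le> t" and A: "A \<in> sets (F t)"
  shows "(\<integral>\<^sup>+\<omega>. indicator A \<omega> * ennreal (ln (terminal_sup N \<omega>) - ln (running_sup N t \<omega>)) \<partial>M)
       = (\<integral>\<^sup>+\<omega>. indicator A \<omega> * ennreal (N t \<omega> / running_sup N t \<omega>) \<partial>M)"
proof -
  have AM: "A \<in> sets M" by (rule F_sets[OF t A])
  have [measurable]: "running_sup N t \<in> borel_measurable M" by (rule St_measM[OF t])
  have [measurable]: "terminal_sup N \<in> borel_measurable M" by (rule Sinf_meas)
  have [measurable]: "N t \<in> borel_measurable M" by (rule N_measM[OF t])
  have [measurable]: "A \<in> sets M" by (rule AM)
  define H where "H \<omega> x = (if \<omega> \<in> A \<and> running_sup N t \<omega> \<le> x \<and> x < terminal_sup N \<omega> \<and> 0 < x then ennreal (1/x) else 0)" for \<omega> x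
  define G where "G \<omega> x = (if \<omega> \<in> A \<and> running_sup N t \<omega> \<le> x \<and> 0 < x then ennreal (N t \<omega> / x^2) else 0)" for \<omega> x
  interpret P: pair_sigma_finite M lborel by (rule pair_M_lborel)
  have Hm: "(\<lambda>(\<omega>, x). H \<omega> x) \<in> borel_measurable (M \<Otimes>\<^sub>M lborel)" unfolding H_def by measurable
  have Gm: "(\<lambda>(\<omega>, x). G \<omega> x) \<in> borel_measurable (M \<Otimes>\<^sub>M lborel)" unfolding G_def by measurable
  have "(\<integral>\<^sup>+\<omega>. indicator A \<omega> * ennreal (ln (terminal_sup N \<omega>) - ln (running_sup N t \<omega>)) \<partial>M)
      = (\<integral>\<^sup>+\<omega>. (\<integral>\<^sup>+x. H \<omega> x \<partial>lborel) \<partial>M)"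
  proof (rule nn_integral_cong_AE)
    show "AE \<omega> in M. indicator A \<omega> * ennreal (ln (terminal_sup N \<omega>) - ln (running_sup N t \<omega>)) = (\<integral>\<^sup>+x. H \<omega> x \<partial>lborel)"
      using AE_good AE_space
    proof eventually_elim
      case (elim \<omega>)
      show ?case
      proof (cases "\<omega> \<in> A")
        case True
        define a where "a = running_sup N t \<omega>"
        define b where "b = terminal_sup N \<omega>"
        have a1: "1 \<le> a" unfolding a_def by (rule St_ge1[OF elim t])
        have ab: "a \<le> b" unfolding a_def b_def by (rule St_le_Sinf[OF elim(1) t])
        have "(\<integral>\<^sup>+x. H \<omega> x \<partial>lborel) = (\<integral>\<^sup>+x. ennreal (indicator {a..<b} x * (1/x)) \<partial>lborel)"
          by (rule nn_integral_cong) (use True a1 in \<open>auto simp: H_def a_def b_def indicator_def\<close>)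
        also have "\<dots> = ennreal (ln b - ln a)" by (rule L1) (use a1 ab in auto)
        finally show ?thesis using True by (simp add: a_def b_def)
      next
        case False then show ?thesis by (simp add: H_def)
      qed
    qed
  qed
  also have "\<dots> = (\<integral>\<^sup>+x. (\<integral>\<^sup>+\<omega>. H \<omega> x \<partial>M) \<partial>lborel)"
    by (rule P.Fubini'[OF Hm, symmetric])
  also have "\<dots> = (\<integral>\<^sup>+x. (\<integral>\<^sup>+\<omega>. G \<omega> x \<partial>M) \<partial>lborel)"
  proof (rule nn_integral_cong)
    fix x :: real
    show "(\<integral>\<^sup>+\<omega>. H \<omega> x \<partial>M) = (\<integral>\<^sup>+\<omega>. G \<omega> x \<partial>M)"
    proof (cases "0 < x")
      case True then show ?thesis unfolding H_def G_def by (rule inner_eq[OF t A])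
    next
      case False then show ?thesis unfolding H_def G_def by simp
    qed
  qed
  also have "\<dots> = (\<integral>\<^sup>+\<omega>. (\<integral>\<^sup>+x. G \<omega> x \<partial>lborel) \<partial>M)"
    by (rule P.Fubini'[OF Gm])
  also have "\<dots> = (\<integral>\<^sup>+\<omega>. indicator A \<omega> * ennreal (N t \<omega> / running_sup N t \<omega>) \<partial>M)"
  proof (rule nn_integral_cong_AE)
    show "AE \<omega> in M. (\<integral>\<^sup>+x. G \<omega> x \<partial>lborel) = indicator A \<omega> * ennreal (N t \<omega> / running_sup N t \<omega>)"
      using AE_good AE_space
    proof eventually_elim
      case (elim \<omega>)
      show ?case
      proof (cases "\<omega> \<in> A")
        case True
        define a where "a = running_sup N t \<omega>"
        have a1: "1 \<le> a" unfolding a_def by (rule St_ge1[OF elim t])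
        have Np: "0 \<le> N t \<omega>" using N_pos[OF t elim(2)] by simp
        have "(\<integral>\<^sup>+x. G \<omega> x \<partial>lborel) = (\<integral>\<^sup>+x. ennreal (N t \<omega>) * ennreal (indicator {a..} x * (1/x^2)) \<partial>lborel)"
        proof (rule nn_integral_cong)
          fix x :: real
          show "G \<omega> x = ennreal (N t \<omega>) * ennreal (indicator {a..} x * (1/x^2))"
          proof (cases "a \<le> x")
            case True
            then have "0 < x" using a1 by linarith
            then show ?thesis using True \<open>\<omega> \<in> A\<close> Np
              by (simp add: G_def a_def indicator_def ennreal_mult[symmetric] divide_simps)
          next
            case False then show ?thesis by (simp add: G_def a_def indicator_def)
          qed
        qed
        also have "\<dots> = ennreal (N t \<omega>) * (\<integral>\<^sup>+x. ennreal (indicator {a..} x * (1/x^2)) \<partial>lborel)"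
          by (rule nn_integral_cmult) measurable
        also have "\<dots> = ennreal (N t \<omega>) * ennreal (1/a)" using a1 by (subst L2) auto
        also have "\<dots> = ennreal (N t \<omega> / a)" using Np a1 by (simp add: ennreal_mult[symmetric])
        finally show ?thesis using True by (simp add: a_def)
      next
        case False then show ?thesis by (simp add: G_def)
      qed
    qed
  qed
  finally show ?thesis .
qed

end

context ctx begin

lemma lnSinf_meas: "(\<lambda>\<omega>. ln (terminal_sup N \<omega>)) \<in> borel_measurable M"
  using Sinf_meas by measurable

lemma lnSinf_nonneg: "AE \<omega> in M. 0 \<le> ln (terminal_sup N \<omega>)"
  using AE_good AE_space
proof eventually_elim
  case (elim \<omega>)
  have "1 \<le> running_sup N 0 \<omega>" by (rule St_ge1[OF elim order_refl])
  also have "\<dots> \<le> terminal_sup N \<omega>" by (rule St_le_Sinf[OF elim(1) order_refl])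
  finally show ?case by simp
qed

lemma lnSinf_int: "integrable M (\<lambda>\<omega>. ln (terminal_sup N \<omega>))"
proof (rule integrableI_nonneg[OF lnSinf_meas lnSinf_nonneg])
  have sp: "space M \<in> sets (F 0)" using sets.top[of "F 0"] F_space[of 0] by simp
  have "(\<integral>\<^sup>+\<omega>. ennreal (ln (terminal_sup N \<omega>)) \<partial>M)
      = (\<integral>\<^sup>+\<omega>. indicator (space M) \<omega> * ennreal (ln (terminal_sup N \<omega>) - ln (running_sup N 0 \<omega>)) \<partial>M)"
    by (rule nn_integral_cong) (simp add: S0)
  also have "\<dots> = (\<integral>\<^sup>+\<omega>. indicator (space M) \<omega> * ennreal (N 0 \<omega> / running_sup N 0 \<omega>) \<partial>M)"
    by (rule CI[OF order_refl sp])
  also have "\<dots> = (\<integral>\<^sup>+\<omega>. 1 \<partial>M)"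
    by (rule nn_integral_cong) (simp add: S0 N0)
  also have "\<dots> = 1" by (simp add: emeasure_space_1)
  finally show "(\<integral>\<^sup>+\<omega>. ennreal (ln (terminal_sup N \<omega>)) \<partial>M) < \<infinity>" by simp
qed

lemma MI:
  assumes t: "0 \<le> t"
  shows "AE \<omega> in M. real_cond_exp M (F t) (\<lambda>\<omega>. ln (terminal_sup N \<omega>)) \<omega>
            = ln (running_sup N t \<omega>) + N t \<omega> / running_sup N t \<omega>"
proof -
  interpret S: sigma_finite_subalgebra M "F t" by (rule sfs[OF t])
  have [measurable]: "running_sup N t \<in> borel_measurable M" by (rule St_measM[OF t])
  have [measurable]: "terminal_sup N \<in> borel_measurable M" by (rule Sinf_meas)
  have [measurable]: "N t \<in> borel_measurable M" by (rule N_measM[OF t])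
  define Z where "Z \<omega> = ln (running_sup N t \<omega>) + N t \<omega> / running_sup N t \<omega>" for \<omega>
  define d where "d \<omega> = ln (terminal_sup N \<omega>) - ln (running_sup N t \<omega>)" for \<omega>
  define r where "r \<omega> = N t \<omega> / running_sup N t \<omega>" for \<omega>
  have facts: "AE \<omega> in M. 0 \<le> ln (running_sup N t \<omega>) \<and> ln (running_sup N t \<omega>) \<le> ln (terminal_sup N \<omega>)
       \<and> 0 \<le> r \<omega> \<and> r \<omega> \<le> 1"
    using AE_good AE_space
  proof eventually_elim
    case (elim \<omega>)
    have a1: "1 \<le> running_sup N t \<omega>" by (rule St_ge1[OF elim t])
    have ab: "running_sup N t \<omega> \<le> terminal_sup N \<omega>" by (rule St_le_Sinf[OF elim(1) t])
    have Np: "0 < N t \<omega>" by (rule N_pos[OF t elim(2)])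
    have Nle: "N t \<omega> \<le> running_sup N t \<omega>" by (rule St_ge_N[OF elim(1) t order_refl])
    show ?case using a1 ab Np Nle by (auto simp: r_def)
  qed
  have ZF: "Z \<in> borel_measurable (F t)"
  proof -
    have [measurable]: "running_sup N t \<in> borel_measurable (F t)" by (rule St_measF[OF t])
    have [measurable]: "N t \<in> borel_measurable (F t)" by (rule N_meas[OF t])
    show ?thesis unfolding Z_def by measurable
  qed
  have iL: "integrable M (\<lambda>\<omega>. ln (running_sup N t \<omega>))"
  proof (rule Bochner_Integration.integrable_bound[OF lnSinf_int])
    show "AE \<omega> in M. norm (ln (running_sup N t \<omega>)) \<le> norm (ln (terminal_sup N \<omega>))"
      using facts by eventually_elim auto
  qed simp
  have ir: "integrable M r"
  proof (rule Bochner_Integration.integrable_bound[of _ "\<lambda>_. 1::real"])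
    show "AE \<omega> in M. norm (r \<omega>) \<le> norm (1::real)"
      using facts by eventually_elim auto
    show "r \<in> borel_measurable M" unfolding r_def by measurable
  qed simp
  have iZ: "integrable M Z" unfolding Z_def using iL ir unfolding r_def by simp
  have id: "integrable M d" unfolding d_def using lnSinf_int iL by simp
  have key: "(\<integral>\<omega>\<in>A. ln (terminal_sup N \<omega>) \<partial>M) = (\<integral>\<omega>\<in>A. Z \<omega> \<partial>M)" if A: "A \<in> sets (F t)" for A
  proof -
    have AM: "A \<in> sets M" by (rule F_sets[OF t A])
    have i1: "integrable M (\<lambda>\<omega>. indicator A \<omega> * d \<omega>)" using integrable_mult_indicator[OF AM id] by simp
    have i2: "integrable M (\<lambda>\<omega>. indicator A \<omega> * r \<omega>)" using integrable_mult_indicator[OF AM ir] by simp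
    have i3: "integrable M (\<lambda>\<omega>. indicator A \<omega> * ln (running_sup N t \<omega>))" using integrable_mult_indicator[OF AM iL] by simp
    have dn: "AE \<omega> in M. 0 \<le> indicator A \<omega> * d \<omega>" using facts by eventually_elim (auto simp: d_def indicator_def)
    have rn: "AE \<omega> in M. 0 \<le> indicator A \<omega> * r \<omega>" using facts by eventually_elim (auto simp: indicator_def)
    have "(\<integral>\<omega>. indicator A \<omega> * d \<omega> \<partial>M) = enn2real (\<integral>\<^sup>+\<omega>. ennreal (indicator A \<omega> * d \<omega>) \<partial>M)"
      by (rule integral_eq_nn_integral[OF _ dn]) (use AM in \<open>simp add: d_def\<close>)
    also have "(\<integral>\<^sup>+\<omega>. ennreal (indicator A \<omega> * d \<omega>) \<partial>M) = (\<integral>\<^sup>+\<omega>. indicator A \<omega> * ennreal (d \<omega>) \<partial>M)"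
      by (simp add: indicator_mult_ennreal)
    also have "\<dots> = (\<integral>\<^sup>+\<omega>. indicator A \<omega> * ennreal (r \<omega>) \<partial>M)"
      unfolding d_def r_def by (rule CI[OF t A])
    also have "\<dots> = (\<integral>\<^sup>+\<omega>. ennreal (indicator A \<omega> * r \<omega>) \<partial>M)"
      by (simp add: indicator_mult_ennreal)
    also have "enn2real \<dots> = (\<integral>\<omega>. indicator A \<omega> * r \<omega> \<partial>M)"
      by (rule integral_eq_nn_integral[symmetric, OF _ rn]) (use AM in \<open>simp add: r_def\<close>)
    finally have dr: "(\<integral>\<omega>. indicator A \<omega> * d \<omega> \<partial>M) = (\<integral>\<omega>. indicator A \<omega> * r \<omega> \<partial>M)" .
    have "(\<integral>\<omega>\<in>A. ln (terminal_sup N \<omega>) \<partial>M) = (\<integral>\<omega>. indicator A \<omega> * ln (running_sup N t \<omega>) + indicator A \<omega> * d \<omega> \<partial>M)"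
      unfolding set_lebesgue_integral_def by (rule Bochner_Integration.integral_cong) (auto simp: d_def algebra_simps)
    also have "\<dots> = (\<integral>\<omega>. indicator A \<omega> * ln (running_sup N t \<omega>) \<partial>M) + (\<integral>\<omega>. indicator A \<omega> * d \<omega> \<partial>M)"
      by (rule Bochner_Integration.integral_add[OF i3 i1])
    also have "\<dots> = (\<integral>\<omega>. indicator A \<omega> * ln (running_sup N t \<omega>) \<partial>M) + (\<integral>\<omega>. indicator A \<omega> * r \<omega> \<partial>M)"
      unfolding dr ..
    also have "\<dots> = (\<integral>\<omega>. indicator A \<omega> * ln (running_sup N t \<omega>) + indicator A \<omega> * r \<omega> \<partial>M)"
      by (rule Bochner_Integration.integral_add[OF i3 i2, symmetric])
    also have "\<dots> = (\<integral>\<omega>\<in>A. Z \<omega> \<partial>M)"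
      unfolding set_lebesgue_integral_def by (rule Bochner_Integration.integral_cong) (auto simp: Z_def r_def algebra_simps)
    finally show ?thesis .
  qed
  have "AE \<omega> in M. real_cond_exp M (F t) (\<lambda>\<omega>. ln (terminal_sup N \<omega>)) \<omega> = Z \<omega>"
    by (rule S.real_cond_exp_charact[OF key lnSinf_int iZ ZF])
  then show ?thesis unfolding Z_def .
qed

end

context ctx begin

lemma Z_rc:
  assumes g: "good \<omega>" and t: "0 \<le> t" and sp: "\<omega> \<in> space M"
  shows "((\<lambda>s. ln (running_sup N s \<omega>) + N s \<omega> / running_sup N s \<omega>) \<longlongrightarrow>
          ln (running_sup N t \<omega>) + N t \<omega> / running_sup N t \<omega>) (at_right t)"
proof -
  have c: "cadlag (\<lambda>s. N s \<omega>)" using g unfolding good_def by blast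
  have r: "((\<lambda>s. running_sup N s \<omega>) \<longlongrightarrow> running_sup N t \<omega>) (at_right t)"
    unfolding St_rs using rs_rc[OF c t] by simp
  have n: "((\<lambda>s. N s \<omega>) \<longlongrightarrow> N t \<omega>) (at_right t)" by (rule cadlag_rc[OF c t])
  have p: "0 < running_sup N t \<omega>" using St_ge1[OF g sp t] by simp
  show ?thesis by (intro tendsto_intros r n) (use p in auto)
qed

lemma SUP_identity:
  assumes g: "good \<omega>" and sp: "\<omega> \<in> space M" and t: "0 \<le> t"
    and mu: "\<And>s. 0 \<le> s \<Longrightarrow> mu s \<omega> = ln (running_sup N s \<omega>) + N s \<omega> / running_sup N s \<omega>"
  shows "(SUP s\<in>{0..t}. mu s \<omega>) = ln (running_sup N t \<omega>) + 1"
proof -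
  define S where "S = running_sup N t \<omega>"
  have c: "cadlag (\<lambda>s. N s \<omega>)" using g unfolding good_def by blast
  have S1: "1 \<le> S" unfolding S_def by (rule St_ge1[OF g sp t])
  have up: "mu s \<omega> \<le> ln S + 1" if s: "s \<in> {0..t}" for s
  proof -
    have s0: "0 \<le> s" "s \<le> t" using s by auto
    have a1: "1 \<le> running_sup N s \<omega>" by (rule St_ge1[OF g sp s0(1)])
    have "running_sup N s \<omega> \<le> S" unfolding S_def by (rule St_mono[OF g s0])
    then have "ln (running_sup N s \<omega>) \<le> ln S" using a1 by simp
    moreover have "N s \<omega> / running_sup N s \<omega> \<le> 1"
      using St_ge_N[OF g s0(1) order_refl] a1 by simp
    ultimately show ?thesis using mu[OF s0(1)] by linarith
  qed
  have bdd: "bdd_above ((\<lambda>s. mu s \<omega>) ` {0..t})" using up by (intro bdd_aboveI2) 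
  have le: "(SUP s\<in>{0..t}. mu s \<omega>) \<le> ln S + 1" using t up by (intro cSUP_least) auto
  have "\<forall>n::nat. \<exists>s. s \<in> {0..t} \<and> S - 1 / Suc n < N s \<omega>"
  proof
    fix n :: nat
    have "S - 1 / Suc n < S" by simp
    then have "S - 1 / Suc n < (SUP s\<in>{0..t}. N s \<omega>)" unfolding S_def running_sup_def .
    then show "\<exists>s. s \<in> {0..t} \<and> S - 1 / Suc n < N s \<omega>"
      using less_cSUP_iff[of "{0..t}" "\<lambda>s. N s \<omega>"] cadlag_bdd[OF c, of t] t by auto
  qed
  then obtain sq where sq: "\<And>n. sq n \<in> {0..t}" "\<And>n. S - 1 / Suc n < N (sq n) \<omega>" by metis
  have Nle: "N (sq n) \<omega> \<le> running_sup N (sq n) \<omega>" for n using St_ge_N[OF g _ order_refl] sq(1)[of n] by auto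
  have Sle: "running_sup N (sq n) \<omega> \<le> S" for n unfolding S_def using St_mono[OF g] sq(1)[of n] by auto
  have inv0: "(\<lambda>n. S - 1 / Suc n) \<longlonglongrightarrow> S"
    using tendsto_diff[OF tendsto_const[of S] LIMSEQ_inverse_real_of_nat] by (simp add: inverse_eq_divide)
  have nlim: "(\<lambda>n. N (sq n) \<omega>) \<longlonglongrightarrow> S"
  proof (rule tendsto_sandwich[OF _ _ inv0 tendsto_const])
    show "eventually (\<lambda>n. S - 1 / Suc n \<le> N (sq n) \<omega>) sequentially"
      using sq(2) by (intro always_eventually allI less_imp_le) blast
    show "eventually (\<lambda>n. N (sq n) \<omega> \<le> S) sequentially"
      using Nle Sle by (intro always_eventually allI) (blast intro: order_trans)
  qed
  have slim: "(\<lambda>n. running_sup N (sq n) \<omega>) \<longlonglongrightarrow> S"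
  proof (rule tendsto_sandwich[OF _ _ nlim tendsto_const])
    show "eventually (\<lambda>n. N (sq n) \<omega> \<le> running_sup N (sq n) \<omega>) sequentially"
      using Nle by (intro always_eventually allI) blast
    show "eventually (\<lambda>n. running_sup N (sq n) \<omega> \<le> S) sequentially"
      using Sle by (intro always_eventually allI) blast
  qed
  have mlim: "(\<lambda>n. mu (sq n) \<omega>) \<longlonglongrightarrow> ln S + S / S"
  proof -
    have "(\<lambda>n. ln (running_sup N (sq n) \<omega>) + N (sq n) \<omega> / running_sup N (sq n) \<omega>) \<longlonglongrightarrow> ln S + S / S"
      by (intro tendsto_intros slim nlim) (use S1 in auto)
    moreover have "mu (sq n) \<omega> = ln (running_sup N (sq n) \<omega>) + N (sq n) \<omega> / running_sup N (sq n) \<omega>" for n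
      using mu sq(1)[of n] by auto
    ultimately show ?thesis by simp
  qed
  have "ln S + S / S \<le> (SUP s\<in>{0..t}. mu s \<omega>)"
    by (rule LIMSEQ_le_const2[OF mlim]) (use sq(1) bdd in \<open>auto intro!: cSUP_upper\<close>)
  then have "ln S + 1 \<le> (SUP s\<in>{0..t}. mu s \<omega>)" using S1 by simp
  with le show ?thesis unfolding S_def by simp
qed

end

theorem mainTheorem3:
  fixes M :: "'a measure" and F :: "real \<Rightarrow> 'a measure"
    and N mu :: "real \<Rightarrow> 'a \<Rightarrow> real"
  assumes "usual_filtration M F"
    and "class_C0 M F N"
    and "\<forall>\<omega>\<in>space M. N 0 \<omega> = 1"
    and "cadlag_process M mu"
    and "\<forall>t\<ge>0. AE \<omega> in M.
           mu t \<omega> = real_cond_exp M (F t) (\<lambda>x. ln (terminal_sup N x)) \<omega>"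
  shows "AE \<omega> in M. \<forall>t\<ge>0.
           ln (running_sup N t \<omega>) = (SUP s\<in>{0..t}. mu s \<omega>) - 1 \<and>
           running_sup N t \<omega> = exp ((SUP s\<in>{0..t}. mu s \<omega>) - 1) \<and>
           1 - N t \<omega> / running_sup N t \<omega> = (SUP s\<in>{0..t}. mu s \<omega>) - mu t \<omega>"
proof -
  interpret ctx M F N by (rule ctx.intro) (use assms in auto)
  define Z where "Z s \<omega> = ln (running_sup N s \<omega>) + N s \<omega> / running_sup N s \<omega>" for s \<omega>
  have AQ: "AE \<omega> in M. \<forall>q\<in>Q0. mu q \<omega> = Z q \<omega>"
  proof (rule AE_ball_countable'[OF _ countable_Q0])
    fix q assume "q \<in> Q0"
    then have q: "0 \<le> q" by (simp add: Q0_def)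
    show "AE \<omega> in M. mu q \<omega> = Z q \<omega>"
    proof -
      have a1: "AE \<omega> in M. mu q \<omega> = real_cond_exp M (F q) (\<lambda>x. ln (terminal_sup N x)) \<omega>"
        using assms(5) q by blast
      show ?thesis using a1 MI[OF q] by eventually_elim (simp add: Z_def)
    qed
  qed
  have Acad: "AE \<omega> in M. cadlag (\<lambda>t. mu t \<omega>)" using assms(4) unfolding cadlag_process_def .
  show ?thesis
    using AQ Acad AE_good AE_space
  proof eventually_elim
    case (elim \<omega>)
    have g: "good \<omega>" and sp: "\<omega> \<in> space M" using elim by auto
    have all: "mu t \<omega> = Z t \<omega>" if t: "0 \<le> t" for t
    proof -
      have "\<forall>n::nat. \<exists>q. q \<in> \<rat> \<and> t < q \<and> q < t + 1 / Suc n"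
        using Rats_dense_in_real by (metis less_add_same_cancel1 of_nat_0_less_iff zero_less_Suc zero_less_divide_1_iff)
      then obtain q where q: "\<And>n. q n \<in> \<rat>" "\<And>n. t < q n" "\<And>n. q n < t + 1 / Suc n" by metis
      have qlim: "q \<longlonglongrightarrow> t"
      proof (rule tendsto_sandwich[of "\<lambda>n. t" q _ "\<lambda>n. t + 1 / Suc n"])
        show "eventually (\<lambda>n. t \<le> q n) sequentially" using q(2) by (intro always_eventually allI less_imp_le) blast
        show "eventually (\<lambda>n. q n \<le> t + 1 / Suc n) sequentially" using q(3) by (intro always_eventually allI less_imp_le) blast
        show "(\<lambda>n. t + 1 / Suc n) \<longlonglongrightarrow> t"
          using tendsto_add[OF tendsto_const[of t] LIMSEQ_inverse_real_of_nat] by (simp add: inverse_eq_divide)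
      qed simp
      have qge: "\<And>n. t \<le> q n" using q(2) less_imp_le by blast
      have qQ: "q n \<in> Q0" for n using q(1,2)[of n] t by (auto simp: Q0_def)
      have l1: "(\<lambda>n. mu (q n) \<omega>) \<longlonglongrightarrow> mu t \<omega>"
        by (rule rc_seq[OF cadlag_rc[OF elim(2) t] qlim qge])
      have l2: "(\<lambda>n. Z (q n) \<omega>) \<longlonglongrightarrow> Z t \<omega>"
        unfolding Z_def by (rule rc_seq[OF Z_rc[OF g t sp] qlim qge])
      have "(\<lambda>n. mu (q n) \<omega>) = (\<lambda>n. Z (q n) \<omega>)" using elim(1) qQ by auto
      with l1 l2 show ?thesis using LIMSEQ_unique by metis
    qed
    show ?case
    proof (intro allI impI)
      fix t :: real assume t: "0 \<le> t"
      have sup: "(SUP s\<in>{0..t}. mu s \<omega>) = ln (running_sup N t \<omega>) + 1"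
        by (rule SUP_identity[OF g sp t]) (use all in \<open>simp add: Z_def\<close>)
      have p: "0 < running_sup N t \<omega>" using St_ge1[OF g sp t] by simp
      show "ln (running_sup N t \<omega>) = (SUP s\<in>{0..t}. mu s \<omega>) - 1 \<and>
           running_sup N t \<omega> = exp ((SUP s\<in>{0..t}. mu s \<omega>) - 1) \<and>
           1 - N t \<omega> / running_sup N t \<omega> = (SUP s\<in>{0..t}. mu s \<omega>) - mu t \<omega>"
        using sup p all[OF t] by (simp add: Z_def)
    qed
  qed
qed


end
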